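(* Let $k\ge 2$, $\Sigma=\{\sigma_1,\dots,\sigma_k\}$, and let $R_k(z)=\sum_{\alpha\in\mathrm{RE}_{na}} z^{|\alpha|}$ be the generating function of the set $\mathrm{RE}_{na}$ defined below. Then $$[z^n]R_k(z) \sim \frac{\sqrt{\psi_k(\eta_k)}}{8\eta_k\sqrt{\pi}}\, n^{-3/2}\,\eta_k^{-n}\qquad (n\to\infty).$$
   Context: Regular expressions over $\Sigma$ are generated by $\beta := \varepsilon \mid \sigma\ (\sigma\in\Sigma) \mid (\beta+\beta) \mid (\beta\cdot\beta) \mid (\beta^\star)$ (the empty-set expression is not counted). The size $|\beta|$ is the number of occurrences of the symbols $\varepsilon$, letters, $+$, $\cdot$, $\star$ in $\beta$ (parentheses not counted). A $\Sigma$-star expression is an expression $(\tau^\star)$ where $\tau$ is a fully parenthesized union of the $k$ letters, each occurring exactly once, in any order and any bracketing; there are $C_k:=\frac{(2k-2)!}{(k-1)!}$ of them, each of size $2k$. $\mathrm{RE}_{na}$ is the set of regular expressions having no subexpression $(\beta_1+\beta_2)$ in which $\beta_1$ or $\beta_2$ is a $\Sigma$-star expression. Define the polynomials $p_k(z)=1-2z-(7+8k)z^2$, $h_k(z)=1-z-C_k z^{2k+1}$, and $\Delta_k(z)=p_k(z)+4z^{2k+1}C_k h_k(z)$. Let $\eta_k$ be the unique real root of $\Delta_k$ in the open interval $\left(0,\frac{1}{\sqrt{8+8k}}\right)$, and set $\psi_k(\eta_k):=-\eta_k\Delta_k'(\eta_k)$. $[z^n]F(z)$ denotes the coefficient of $z^n$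 in $F$, and $a_n\sim b_n$ means $a_n/b_n\to 1$. *)

theory Defs
  imports "HOL-Analysis.Analysis" "HOL-Library.Landau_Symbols"
begin

text \<open>Regular expressions; letters are natural numbers, the alphabet of size k is {0..<k}.\<close>
datatype rexp = Eps | Sym nat | Plus rexp rexp | Conc rexp rexp | Star rexp

fun rsize :: "rexp \<Rightarrow> nat" where
  "rsize Eps = 1"
| "rsize (Sym a) = 1"
| "rsize (Plus r s) = 1 + rsize r + rsize s"
| "rsize (Conc r s) = 1 + rsize r + rsize s"
| "rsize (Star r) = 1 + rsize r"

fun over :: "nat \<Rightarrow> rexp \<Rightarrow> bool" where
  "over k Eps = True"
| "over k (Sym a) = (a < k)"
| "over k (Plus r s) = (over k r \<and> over k s)"
| "over k (Conc r s) = (over k r \<and> over k s)"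
| "over k (Star r) = over k r"

text \<open>Unions of letters only (fully parenthesized, any bracketing).\<close>
fun letter_union :: "rexp \<Rightarrow> bool" where
  "letter_union (Sym a) = True"
| "letter_union (Plus r s) = (letter_union r \<and> letter_union s)"
| "letter_union _ = False"

fun letters :: "rexp \<Rightarrow> nat list" where
  "letters Eps = []"
| "letters (Sym a) = [a]"
| "letters (Plus r s) = letters r @ letters s"
| "letters (Conc r s) = letters r @ letters s"
| "letters (Star r) = letters r"

definition sigma_star :: "nat \<Rightarrow> rexp \<Rightarrow> bool" where
  "sigma_star k r \<longleftrightarrow> (\<exists>t. r = Star t \<and> letter_union t \<and> distinct (letters t)
                          \<and> set (letters t) = {0..<k})"

fun na :: "nat \<Rightarrow> rexp \<Rightarrow> bool" where
  "na k Eps = True"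
| "na k (Sym a) = True"
| "na k (Plus r s) = (\<not> sigma_star k r \<and> \<not> sigma_star k s \<and> na k r \<and> na k s)"
| "na k (Conc r s) = (na k r \<and> na k s)"
| "na k (Star r) = na k r"

definition RE_na :: "nat \<Rightarrow> rexp set" where
  "RE_na k = {r. over k r \<and> na k r}"

text \<open>[z^n] R_k(z): number of expressions in RE_na of size n.\<close>
definition coeffR :: "nat \<Rightarrow> nat \<Rightarrow> nat" where
  "coeffR k n = card {r \<in> RE_na k. rsize r = n}"

definition Ck :: "nat \<Rightarrow> real" where
  "Ck k = fact (2*k - 2) / fact (k - 1)"

definition pk :: "nat \<Rightarrow> real \<Rightarrow> real" where
  "pk k z = 1 - 2*z - (7 + 8 * real k) * z^2"

definition hk :: "nat \<Rightarrow> real \<Rightarrow> real" where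
  "hk k z = 1 - z - Ck k * z^(2*k+1)"

definition Delta :: "nat \<Rightarrow> real \<Rightarrow> real" where
  "Delta k z = pk k z + 4 * z^(2*k+1) * Ck k * hk k z"

definition eta :: "nat \<Rightarrow> real" where
  "eta k = (THE x. 0 < x \<and> x < 1 / sqrt (8 + 8 * real k) \<and> Delta k x = 0)"

definition psi :: "nat \<Rightarrow> real" where
  "psi k = - eta k * deriv (Delta k) (eta k)"

end

theory Submission
  imports Defs "HOL-Complex_Analysis.Complex_Analysis" "HOL-Real_Asymp.Real_Asymp"
begin

definition EE :: "nat \<Rightarrow> nat \<Rightarrow> rexp set" where
  "EE k n = {r. over k r \<and> na k r \<and> rsize r = n}"

definition NN :: "nat \<Rightarrow> nat \<Rightarrow> rexp set" where
  "NN k n = {r \<in> EE k n. \<not> sigma_star k r}"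

lemma rsize_pos: "rsize r > 0"
  by (induction r) auto

lemma EE_0: "EE k 0 = {}"
  using rsize_pos by (auto simp: EE_def)

lemma EE_Suc: "EE k (Suc m) =
   (if m = 0 then insert Eps (Sym ` {..<k}) else {})
   \<union> Star ` EE k m
   \<union> (\<Union>i\<in>{..m}. (\<lambda>(r,s). Conc r s) ` (EE k i \<times> EE k (m-i)))
   \<union> (\<Union>i\<in>{..m}. (\<lambda>(r,s). Plus r s) ` (NN k i \<times> NN k (m-i)))"
  (is "?L = ?R")
proof
  show "?L \<subseteq> ?R"
  proof
    fix r assume r: "r \<in> ?L"
    show "r \<in> ?R"
    proof (cases r)
      case Eps then show ?thesis using r by (auto simp: EE_def)
    next
      case (Sym a) then show ?thesis using r by (auto simp: EE_def)
    next
      case (Star t) then show ?thesis using r by (auto simp: EE_def)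
    next
      case (Conc t u)
      then have "t \<in> EE k (rsize t)" "u \<in> EE k (m - rsize t)" "rsize t \<le> m"
        using r by (auto simp: EE_def)
      then show ?thesis using Conc by blast
    next
      case (Plus t u)
      then have "t \<in> NN k (rsize t)" "u \<in> NN k (m - rsize t)" "rsize t \<le> m"
        using r by (auto simp: EE_def NN_def)
      then show ?thesis using Plus by blast
    qed
  qed
next
  show "?R \<subseteq> ?L"
    by (auto simp: EE_def NN_def split: if_splits)
qed

lemma finite_EE: "finite (EE k n)"
proof (induction n rule: less_induct)
  case (less n)
  show ?case
  proof (cases n)
    case 0 then show ?thesis by (simp add: EE_0)
  next
    case (Suc m)
    have fN: "finite (NN k i)" if "i \<le> m" for i
      using less[of i] that Suc by (auto simp: NN_def)
    have fE: "finite (EE k i)" if "i \<le> m" for i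
      using less[of i] that Suc by auto
    show ?thesis unfolding Suc EE_Suc
      using fN fE by auto
  qed
qed

lemma finite_NN: "finite (NN k n)"
  using finite_EE[of k n] by (simp add: NN_def)

lemma card_EE_Suc: "card (EE k (Suc m)) =
   (if m = 0 then k + 1 else 0) + card (EE k m)
   + (\<Sum>i\<le>m. card (EE k i) * card (EE k (m-i)))
   + (\<Sum>i\<le>m. card (NN k i) * card (NN k (m-i)))"
proof -
  let ?A = "(if m = 0 then insert Eps (Sym ` {..<k}) else {})"
  let ?B = "Star ` EE k m"
  let ?C = "(\<Union>i\<in>{..m}. (\<lambda>(r,s). Conc r s) ` (EE k i \<times> EE k (m-i)))"
  let ?D = "(\<Union>i\<in>{..m}. (\<lambda>(r,s). Plus r s) ` (NN k i \<times> NN k (m-i)))"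
  have fin: "finite ?A" "finite ?B" "finite ?C" "finite ?D"
    using finite_EE finite_NN by auto
  have cA: "card ?A = (if m = 0 then k + 1 else 0)"
  proof -
    have "card (insert Eps (Sym ` {..<k})) = k + 1"
      by (subst card_insert_disjoint) (auto simp: card_image inj_on_def)
    then show ?thesis by simp
  qed
  have cB: "card ?B = card (EE k m)"
    by (rule card_image) (auto simp: inj_on_def)
  have cC: "card ?C = (\<Sum>i\<le>m. card (EE k i) * card (EE k (m-i)))"
  proof (subst card_UN_disjoint)
    show "\<forall>i\<in>{..m}. \<forall>j\<in>{..m}. i \<noteq> j \<longrightarrow>
      (\<lambda>(r,s). Conc r s) ` (EE k i \<times> EE k (m-i)) \<inter> (\<lambda>(r,s). Conc r s) ` (EE k j \<times> EE k (m-j)) = {}"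
      by (auto simp: EE_def)
    show "(\<Sum>i\<le>m. card ((\<lambda>(r,s). Conc r s) ` (EE k i \<times> EE k (m-i)))) =
          (\<Sum>i\<le>m. card (EE k i) * card (EE k (m-i)))"
      by (intro sum.cong refl, subst card_image) (auto simp: inj_on_def card_cartesian_product)
  qed (use finite_EE in auto)
  have cD: "card ?D = (\<Sum>i\<le>m. card (NN k i) * card (NN k (m-i)))"
  proof (subst card_UN_disjoint)
    show "\<forall>i\<in>{..m}. \<forall>j\<in>{..m}. i \<noteq> j \<longrightarrow>
      (\<lambda>(r,s). Plus r s) ` (NN k i \<times> NN k (m-i)) \<inter> (\<lambda>(r,s). Plus r s) ` (NN k j \<times> NN k (m-j)) = {}"
      by (auto simp: EE_def NN_def)
    show "(\<Sum>i\<le>m. card ((\<lambda>(r,s). Plus r s) ` (NN k i \<times> NN k (m-i)))) =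
          (\<Sum>i\<le>m. card (NN k i) * card (NN k (m-i)))"
      by (intro sum.cong refl, subst card_image) (auto simp: inj_on_def card_cartesian_product)
  qed (use finite_NN in auto)
  have d1: "?A \<inter> ?B = {}" "(?A \<union> ?B) \<inter> ?C = {}" "(?A \<union> ?B \<union> ?C) \<inter> ?D = {}"
    by auto
  have "card (?A \<union> ?B \<union> ?C \<union> ?D) = card ?A + card ?B + card ?C + card ?D"
    using fin d1 by (simp add: card_Un_disjoint)
  then show ?thesis unfolding EE_Suc cA cB cC cD by simp
qed

definition LU :: "nat set \<Rightarrow> rexp set" where
  "LU A = {t. letter_union t \<and> distinct (letters t) \<and> set (letters t) = A}"

definition Tr :: "nat \<Rightarrow> real" where
  "Tr m = (if m = 0 then 0 else fact (2*m-2) / fact (m-1))"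

lemma lu_ne: "letter_union t \<Longrightarrow> letters t \<noteq> []"
  by (induction t) auto

lemma lu_size: "letter_union t \<Longrightarrow> rsize t + 1 = 2 * length (letters t)"
  by (induction t) auto

lemma lu_over: "letter_union t \<Longrightarrow> over k t = (\<forall>a\<in>set (letters t). a < k)"
  by (induction t) auto

lemma lu_na: "letter_union t \<Longrightarrow> na k t"
  by (induction t) (auto simp: sigma_star_def)

lemma lu_not_ss: "letter_union t \<Longrightarrow> \<not> sigma_star k t"
  by (cases t) (auto simp: sigma_star_def)

lemma ss_in: assumes "sigma_star k r" shows "r \<in> EE k (2*k)"
proof -
  obtain t where t: "r = Star t" "letter_union t" "distinct (letters t)" "set (letters t) = {0..<k}"
    using assms by (auto simp: sigma_star_def)
  have "length (letters t) = k" using t distinct_card[of "letters t"] by simp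
  then have "rsize r = 2*k" using lu_size[OF t(2)] t(1) by simp
  moreover have "over k r" using t lu_over[OF t(2), of k] by simp
  moreover have "na k r" using t lu_na by simp
  ultimately show ?thesis by (simp add: EE_def)
qed

lemma ss_part: "{r \<in> EE k i. sigma_star k r} = (if i = 2*k then Collect (sigma_star k) else {})"
  using ss_in by (auto simp: EE_def)

lemma LU_empty: "LU {} = {}"
  using lu_ne by (auto simp: LU_def)

lemma LU_finite: "finite A \<Longrightarrow> finite (LU A)"
proof (induction "card A" arbitrary: A rule: less_induct)
  case less
  have eq: "LU A \<subseteq> (\<Union>a\<in>A. {Sym a}) \<union> (\<Union>B\<in>Pow A - {{}, A}. (\<lambda>(r,s). Plus r s) ` (LU B \<times> LU (A - B)))"
  proof
    fix t assume t: "t \<in> LU A"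
    show "t \<in> (\<Union>a\<in>A. {Sym a}) \<union> (\<Union>B\<in>Pow A - {{}, A}. (\<lambda>(r,s). Plus r s) ` (LU B \<times> LU (A - B)))"
    proof (cases t)
      case (Plus r s)
      have r: "r \<in> LU (set (letters r))" and s: "s \<in> LU (A - set (letters r))"
        using t Plus by (auto simp: LU_def)
      have "set (letters r) \<noteq> {}" "set (letters s) \<noteq> {}" using t Plus lu_ne by (auto simp: LU_def)
      moreover have "set (letters r) \<inter> set (letters s) = {}" using t Plus by (auto simp: LU_def)
      moreover obtain x where "x \<in> set (letters s)" using \<open>set (letters s) \<noteq> {}\<close> by (meson ex_in_conv)
      moreover have "A = set (letters r) \<union> set (letters s)" using t Plus by (auto simp: LU_def)
      ultimately have "set (letters r) \<in> Pow A - {{}, A}" by blast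
      then show ?thesis using r s Plus by blast
    qed (use t in \<open>auto simp: LU_def\<close>)
  qed
  have "finite (LU B)" "finite (LU (A - B))" if "B \<in> Pow A - {{}, A}" for B
  proof -
    have "B \<subset> A" using that by blast
    then have "card B < card A" using less(2) by (simp add: psubset_card_mono)
    then show "finite (LU B)" using less that finite_subset by auto
    have "A - B \<subset> A" using that by blast
    then have "card (A - B) < card A" using less(2) by (simp add: psubset_card_mono)
    then show "finite (LU (A - B))" using less that by auto
  qed
  then show ?case using eq less(2) by (auto intro: finite_subset)
qed

lemma LU_eq: "LU A = (if card A = 1 then {Sym (the_elem A)} else {})
   \<union> (\<Union>B\<in>Pow A. (\<lambda>(r,s). Plus r s) ` (LU B \<times> LU (A - B)))" (is "_ = ?R")
proof
  show "LU A \<subseteq> ?R"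
  proof
    fix t assume t: "t \<in> LU A"
    show "t \<in> ?R"
    proof (cases t)
      case (Plus r s)
      have r: "r \<in> LU (set (letters r))" and s: "s \<in> LU (A - set (letters r))"
        using t Plus by (auto simp: LU_def)
      have "set (letters r) \<in> Pow A" using t Plus by (auto simp: LU_def)
      then show ?thesis using r s Plus by blast
    next
      case (Sym a)
      then show ?thesis using t by (auto simp: LU_def)
    qed (use t in \<open>auto simp: LU_def\<close>)
  qed
next
  show "?R \<subseteq> LU A"
  proof -
    have "card A = 1 \<Longrightarrow> Sym (the_elem A) \<in> LU A"
      by (auto simp: LU_def card_Suc_eq)
    moreover have "Plus r s \<in> LU A" if "B \<subseteq> A" "r \<in> LU B" "s \<in> LU (A - B)" for B r s
      using that by (auto simp: LU_def)
    ultimately show ?thesis by auto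
  qed
qed

lemma Tr_0 [simp]: "Tr 0 = 0" by (simp add: Tr_def)

lemma g_closed: "((1/2::real) gchoose (Suc n)) * fact (Suc n) * (-4)^(Suc n) = -2 * fact (2*n) / fact n"
proof (induction n)
  case 0 then show ?case by simp
next
  case (Suc n)
  have P: "((1/2::real) gchoose (Suc (Suc n))) * fact (Suc (Suc n))
     = ((1/2::real) gchoose (Suc n)) * fact (Suc n) * (1/2 - real (Suc n))"
    unfolding gbinomial_mult_fact' by (simp add: atLeast0_lessThan_Suc)
  have "((1/2::real) gchoose (Suc (Suc n))) * fact (Suc (Suc n)) * (-4)^(Suc (Suc n))
     = (((1/2::real) gchoose (Suc n)) * fact (Suc n) * (-4)^(Suc n)) * ((1/2 - real (Suc n)) * (-4))"
    unfolding P by (simp add: algebra_simps)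
  also have "\<dots> = -2 * fact (2*n) / fact n * (4 * real n + 2)"
  proof -
    have "(1/2 - real (Suc n)) * (-4) = 4 * real n + 2" by simp
    then show ?thesis by (simp only: Suc)
  qed
  also have "\<dots> = -2 * fact (2 * Suc n) / fact (Suc n)"
  proof -
    have f1: "fact (2 * Suc n) = (2*real n + 2) * (2*real n + 1) * (fact (2*n) :: real)"
      by (simp add: fact_Suc algebra_simps)
    have f2: "fact (Suc n) = (real n + 1) * (fact n :: real)" by (simp add: algebra_simps)
    have "real n + 1 \<noteq> 0" by simp
    have "-2 * fact (2 * Suc n) / fact (Suc n) = -2 * ((real n + 1) * ((4 * real n + 2) * fact (2*n))) / ((real n + 1) * fact n)"
      unfolding f1 f2 by (simp add: algebra_simps)
    also have "\<dots> = -2 * ((4 * real n + 2) * fact (2*n)) / fact n"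
    proof -
      have "(real n + 1) * fact n \<noteq> (0::real)" "fact n \<noteq> (0::real)" by simp_all
      then show ?thesis by (simp add: divide_simps)
    qed
    finally show ?thesis by simp
  qed
  finally show ?case .
qed

lemma g_Tr: "j \<ge> 1 \<Longrightarrow> ((1/2::real) gchoose j) * (-4)^j = -2 * Tr j / fact j"
proof -
  assume "j \<ge> 1"
  then obtain n where n: "j = Suc n" by (cases j) auto
  have "((1/2::real) gchoose j) * (-4)^j * fact j = -2 * Tr j"
    using g_closed[of n] unfolding n Tr_def by (simp add: algebra_simps)
  then show ?thesis by (simp add: field_simps)
qed

lemma Tr_rec:
  assumes "m \<ge> 2"
  shows "Tr m = (\<Sum>j\<le>m. real (m choose j) * Tr j * Tr (m - j))"
proof -
  define u where "u j = ((1/2::real) gchoose j) * (-4)^j" for j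
  define v where "v j = Tr j / fact j" for j
  have uv: "u j = -2 * v j + (if j = 0 then 1 else 0)" for j
    by (cases "j = 0") (auto simp: u_def v_def g_Tr)
  have "(\<Sum>j=0..m. ((1/2::real) gchoose j) * ((1/2) gchoose (m - j))) = (1/2 + 1/2) gchoose m"
    by (rule gbinomial_Vandermonde)
  also have "\<dots> = 0"
  proof -
    have "(1/2 + 1/2 :: real) = of_nat 1" by simp
    then have "((1/2 + 1/2 :: real) gchoose m) = of_nat (1 choose m)"
      by (simp only: binomial_gbinomial)
    then show ?thesis using assms by simp
  qed
  finally have "(\<Sum>j=0..m. ((1/2::real) gchoose j) * ((1/2) gchoose (m - j))) * (-4)^m = 0" by simp
  then have "(\<Sum>j\<le>m. u j * u (m - j)) = 0"
    unfolding u_def sum_distrib_right atMost_atLeast0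
    by (subst (asm) sum.cong[OF refl, where h = "\<lambda>j. u j * u (m - j)"])
       (auto simp: u_def power_add[symmetric])
  moreover have "u j * u (m - j) = 4 * (v j * v (m - j)) - 2 * (if j = 0 then v m else 0) - 2 * (if j = m then v m else 0)"
    if "j \<le> m" for j
    unfolding uv using that assms by (auto simp: algebra_simps)
  ultimately have "(\<Sum>j\<le>m. 4 * (v j * v (m - j)) - 2 * (if j = 0 then v m else 0) - 2 * (if j = m then v m else 0)) = 0"
    by simp
  then have "4 * (\<Sum>j\<le>m. v j * v (m - j)) - 4 * v m = 0"
    by (simp add: sum_subtractf sum_distrib_left[symmetric])
  then have vm: "v m = (\<Sum>j\<le>m. v j * v (m - j))" by simp
  have "Tr m = fact m * v m" by (simp add: v_def)
  also have "\<dots> = (\<Sum>j\<le>m. fact m * (v j * v (m - j)))" by (simp add: vm sum_distrib_left)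
  also have "\<dots> = (\<Sum>j\<le>m. real (m choose j) * Tr j * Tr (m - j))"
  proof (intro sum.cong refl)
    fix j assume "j \<in> {..m}"
    then have "real (m choose j) = fact m / (fact j * fact (m - j))" by (simp add: binomial_fact)
    then show "fact m * (v j * v (m - j)) = real (m choose j) * Tr j * Tr (m - j)"
      by (simp add: v_def)
  qed
  finally show ?thesis .
qed

lemma card_LU_rec:
  assumes "finite A"
  shows "card (LU A) = (if card A = 1 then 1 else 0) + (\<Sum>B\<in>Pow A. card (LU B) * card (LU (A - B)))"
proof -
  let ?S = "(if card A = 1 then {Sym (the_elem A)} else {})"
  let ?P = "(\<Union>B\<in>Pow A. (\<lambda>(r,s). Plus r s) ` (LU B \<times> LU (A - B)))"
  have fin: "finite (LU B)" if "B \<subseteq> A" for B using assms that LU_finite finite_subset by blast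
  have finD: "finite (LU (A - B))" for B using assms LU_finite by simp
  have cS: "card ?S = (if card A = 1 then 1 else 0)" by simp
  have cP: "card ?P = (\<Sum>B\<in>Pow A. card (LU B) * card (LU (A - B)))"
  proof (subst card_UN_disjoint)
    show "\<forall>i\<in>Pow A. \<forall>j\<in>Pow A. i \<noteq> j \<longrightarrow>
      (\<lambda>(r,s). Plus r s) ` (LU i \<times> LU (A - i)) \<inter> (\<lambda>(r,s). Plus r s) ` (LU j \<times> LU (A - j)) = {}"
      by (auto simp: LU_def)
    show "(\<Sum>B\<in>Pow A. card ((\<lambda>(r,s). Plus r s) ` (LU B \<times> LU (A - B)))) =
          (\<Sum>B\<in>Pow A. card (LU B) * card (LU (A - B)))"
      by (intro sum.cong refl, subst card_image) (auto simp: inj_on_def card_cartesian_product)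
  qed (use assms fin finD in auto)
  have "?S \<inter> ?P = {}" by auto
  moreover have "finite ?P" using assms fin finD by auto
  ultimately have "card (?S \<union> ?P) = card ?S + card ?P" by (simp add: card_Un_disjoint)
  then show ?thesis using LU_eq[of A] cS cP by simp
qed

lemma sum_Pow_card:
  assumes "finite A"
  shows "(\<Sum>B\<in>Pow A. h (card B)) = (\<Sum>j\<le>card A. real (card A choose j) * (h j :: real))"
proof -
  have "(\<Sum>B\<in>Pow A. h (card B)) = (\<Sum>j\<in>{..card A}. \<Sum>B\<in>{B \<in> Pow A. card B = j}. h (card B))"
    by (rule sum.group[symmetric]) (use assms in \<open>auto intro: card_mono\<close>)
  also have "\<dots> = (\<Sum>j\<le>card A. real (card A choose j) * h j)"
  proof (intro sum.cong refl)
    fix j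
    have "{B \<in> Pow A. card B = j} = {B. B \<subseteq> A \<and> card B = j}" by auto
    then have "card {B \<in> Pow A. card B = j} = card A choose j" using n_subsets[OF assms] by simp
    then show "(\<Sum>B\<in>{B \<in> Pow A. card B = j}. h (card B)) = real (card A choose j) * h j"
      by simp
  qed
  finally show ?thesis .
qed

lemma card_LU: "finite A \<Longrightarrow> real (card (LU A)) = Tr (card A)"
proof (induction "card A" arbitrary: A rule: less_induct)
  case less
  show ?case
  proof (cases "card A = 0")
    case True
    then have "A = {}" using less by simp
    then show ?thesis by (simp add: LU_empty)
  next
    case False
    let ?m = "card A"
    have "real (card (LU A)) = (if ?m = 1 then 1 else 0) + (\<Sum>B\<in>Pow A. real (card (LU B)) * real (card (LU (A - B))))"
      using card_LU_rec[OF less(2)] by simp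
    also have "(\<Sum>B\<in>Pow A. real (card (LU B)) * real (card (LU (A - B)))) = (\<Sum>B\<in>Pow A. Tr (card B) * Tr (?m - card B))"
    proof (intro sum.cong refl)
      fix B assume B: "B \<in> Pow A"
      have cd: "card (A - B) = ?m - card B" using B less(2) by (simp add: card_Diff_subset finite_subset)
      show "real (card (LU B)) * real (card (LU (A - B))) = Tr (card B) * Tr (?m - card B)"
      proof (cases "B = {} \<or> B = A")
        case True then show ?thesis by (auto simp: LU_empty)
      next
        case F: False
        have "B \<subset> A" using B F by auto
        then have c1: "card B < ?m" using less(2) by (simp add: psubset_card_mono)
        have "A - B \<subset> A" using B F by auto
        then have c2: "card (A - B) < ?m" using less(2) by (simp add: psubset_card_mono)
        have "finite B" using B less(2) finite_subset by auto
        then show ?thesis using less(1)[OF c1] less(1)[OF c2] less(2) cd by simp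
      qed
    qed
    also have "\<dots> = (\<Sum>j\<le>?m. real (?m choose j) * (Tr j * Tr (?m - j)))"
      using sum_Pow_card[OF less(2), of "\<lambda>j. Tr j * Tr (?m - j)"] by simp
    finally have eq: "real (card (LU A)) = (if ?m = 1 then 1 else 0) + (\<Sum>j\<le>?m. real (?m choose j) * (Tr j * Tr (?m - j)))" .
    show ?thesis
    proof (cases "?m = 1")
      case True
      then show ?thesis using eq by (simp add: Tr_def)
    next
      case F2: False
      then have "?m \<ge> 2" using False by linarith
      then show ?thesis using eq Tr_rec[of ?m] F2 by (simp add: mult.assoc)
    qed
  qed
qed

lemma card_SS: "k \<ge> 1 \<Longrightarrow> real (card (Collect (sigma_star k))) = Ck k"
proof -
  assume k: "k \<ge> 1"
  have "Collect (sigma_star k) = Star ` LU {0..<k}"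
    by (auto simp: sigma_star_def LU_def)
  then have "card (Collect (sigma_star k)) = card (LU {0..<k})"
    by (simp add: card_image inj_on_def)
  then show ?thesis using card_LU[of "{0..<k}"] k by (simp add: Tr_def Ck_def)
qed

definition cc :: "nat \<Rightarrow> nat \<Rightarrow> real" where
  "cc k n = real (coeffR k n)"

definition sig :: "nat \<Rightarrow> nat \<Rightarrow> real" where
  "sig k i = (if i = 2*k then Ck k else 0)"

lemma cc_EE: "cc k n = real (card (EE k n))"
  by (simp add: cc_def coeffR_def RE_na_def EE_def)

lemma cc_0: "cc k 0 = 0" by (simp add: cc_EE EE_0)

lemma card_NN: "k \<ge> 1 \<Longrightarrow> real (card (NN k i)) = cc k i - sig k i"
proof -
  assume k: "k \<ge> 1"
  have "EE k i = NN k i \<union> {r \<in> EE k i. sigma_star k r}" by (auto simp: NN_def)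
  moreover have "NN k i \<inter> {r \<in> EE k i. sigma_star k r} = {}" by (auto simp: NN_def)
  ultimately have "card (EE k i) = card (NN k i) + card {r \<in> EE k i. sigma_star k r}"
    using finite_EE[of k i] finite_NN[of k i] by (metis card_Un_disjoint finite_Un)
  moreover have "real (card {r \<in> EE k i. sigma_star k r}) = sig k i"
    unfolding ss_part sig_def using card_SS[OF k] by simp
  ultimately show ?thesis by (simp add: cc_EE)
qed

lemma cc_rec: "k \<ge> 1 \<Longrightarrow> cc k (Suc m) =
   (if m = 0 then real k + 1 else 0) + cc k m
   + (\<Sum>i\<le>m. cc k i * cc k (m-i))
   + (\<Sum>i\<le>m. (cc k i - sig k i) * (cc k (m-i) - sig k (m-i)))"
proof -
  assume k: "k \<ge> 1"
  show ?thesis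
    unfolding cc_EE card_EE_Suc using card_NN[OF k] by (simp add: cc_EE)
qed

definition Dl :: "nat \<Rightarrow> 'a::comm_ring_1 \<Rightarrow> 'a \<Rightarrow> 'a" where
  "Dl k c z = 1 - 2*z - (7 + 8 * of_nat k) * z^2 + 4 * z^(2*k+1) * c * (1 - z - c * z^(2*k+1))"

definition Pw :: "nat \<Rightarrow> 'a::comm_ring_1 \<Rightarrow> 'a \<Rightarrow> 'a" where
  "Pw n z e = (\<Sum>i<n. e^(n - Suc i) * z^i)"

definition Dd :: "nat \<Rightarrow> 'a::comm_ring_1 \<Rightarrow> 'a \<Rightarrow> 'a \<Rightarrow> 'a" where
  "Dd k c e z = -2 - (7 + 8 * of_nat k) * (z + e)
     + 4 * c * (Pw (2*k+1) z e - Pw (2*k+2) z e - c * Pw (4*k+2) z e)"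

definition Bl :: "nat \<Rightarrow> 'a::comm_ring_1 \<Rightarrow> 'a \<Rightarrow> 'a" where
  "Bl k c z = 1 - z + 2 * c * z^(2*k+1)"

lemma pow_4k2: "z^(2*k+1) * z^(2*k+1) = (z::'a::comm_ring_1)^(4*k+2)"
proof -
  have "4*k+2 = (2*k+1)+(2*k+1)" by simp
  then show ?thesis by (simp only: power_add)
qed

lemma pow_4k2': "z * z^(4*k+1) = (z::'a::comm_ring_1)^(4*k+2)"
  by simp

lemma pow_2k2: "z^(2*k+1) * z = (z::'a::comm_ring_1)^(2*k+2)"
  by simp

lemma Pw_2: "Pw 2 z e = e + z"
  by (simp add: Pw_def numeral_2_eq_2)

lemma Dl_alt: "Dl k c z = 1 - 2*z - (7 + 8 * of_nat k) * z^2 + 4 * c * z^(2*k+1)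
   - 4 * c * z^(2*k+2) - 4 * c * c * z^(4*k+2)"
proof -
  note pow_4k2[of z k] pow_2k2[of z k]
  have "4 * z^(2*k+1) * c * (1 - z - c * z^(2*k+1)) = 4*c*z^(2*k+1) - 4*c*(z^(2*k+1)*z) - 4*c*c*(z^(2*k+1)*z^(2*k+1))"
    by (simp add: algebra_simps)
  then show ?thesis unfolding Dl_def pow_4k2 pow_2k2 by simp
qed

lemma Pw_diff: "z^n - e^n = (z - e) * Pw n z e"
  unfolding Pw_def by (rule power_diff_sumr2)

lemma Dl_diff: "Dl k c z - Dl k c e = (z - e) * Dd k c e z"
proof -
  have "Dl k c z - Dl k c e = -2 * (z - e) - (7 + 8 * of_nat k) * (z^2 - e^2)
     + 4 * c * (z^(2*k+1) - e^(2*k+1)) - 4 * c * (z^(2*k+2) - e^(2*k+2)) - 4 * c * c * (z^(4*k+2) - e^(4*k+2))"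
    unfolding Dl_alt by (simp add: algebra_simps)
  also have "\<dots> = (z - e) * Dd k c e z"
  proof -
    have "z^2 - e^2 = (z - e) * (z + e)" by (simp add: power2_eq_square algebra_simps)
    then show ?thesis unfolding Pw_diff Dd_def by (simp add: algebra_simps Pw_2)
  qed
  finally show ?thesis .
qed

lemma Bl_Dl_aux: "(1 - z + 2*c*w)^2 - (1 - 2*z - (7 + 8*K)*z^2 + 4*c*w - 4*c*(w*z) - 4*c*c*(w*w))
   = 8*z*((K+1)*z) + 8*c^2*(w*w::'a::comm_ring_1)"
  by (simp add: power2_eq_square algebra_simps)

lemma Bl_Dl: "Bl k c z ^ 2 - Dl k c z = 8 * z * ((of_nat k + 1) * z + c^2 * z^(4*k+1))"
proof -
  have "Bl k c z ^ 2 - Dl k c z = 8*z*((of_nat k+1)*z) + 8*c^2*(z^(2*k+1)*z^(2*k+1))"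
    unfolding Bl_def Dl_alt pow_2k2[symmetric] pow_4k2[symmetric] by (rule Bl_Dl_aux)
  also have "\<dots> = 8 * z * ((of_nat k + 1) * z + c^2 * z^(4*k+1))"
    unfolding pow_4k2 pow_4k2'[symmetric] by (simp add: algebra_simps)
  finally show ?thesis .
qed

lemma Delta_Dl: "Delta k = Dl k (Ck k)"
  by (auto simp: Delta_def pk_def hk_def Dl_def fun_eq_iff algebra_simps)

definition x0 :: "nat \<Rightarrow> real" where "x0 k = 1 / sqrt (8 + 8 * real k)"

lemma fact_le_pow: "fact (m + n) \<le> real (m + n) ^ n * fact m"
proof (induction n)
  case 0 then show ?case by simp
next
  case (Suc n)
  have "fact (m + Suc n) = real (m + Suc n) * fact (m + n)" by simp
  also have "\<dots> \<le> real (m + Suc n) * (real (m + n) ^ n * fact m)"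
    using Suc by (intro mult_left_mono) auto
  also have "\<dots> \<le> real (m + Suc n) * (real (m + Suc n) ^ n * fact m)"
    by (intro mult_left_mono mult_right_mono power_mono) auto
  also have "\<dots> = real (m + Suc n) ^ Suc n * fact m" by simp
  finally show ?case .
qed

lemma Ck_pos: "Ck k > 0" by (simp add: Ck_def)

lemma Ck_le: assumes "k \<ge> 1" shows "Ck k \<le> (2 * real k) ^ (k - 1)"
proof -
  have "2*k-2 = (k-1) + (k-1)" using assms by simp
  then have "fact (2*k-2) = (fact ((k-1) + (k-1)) :: real)" by simp
  also have "\<dots> \<le> real ((k-1)+(k-1)) ^ (k-1) * fact (k-1)" by (rule fact_le_pow)
  also have "\<dots> \<le> (2 * real k) ^ (k-1) * fact (k-1)"
    using assms by (intro mult_right_mono power_mono) auto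
  finally show ?thesis unfolding Ck_def by (simp add: divide_le_eq)
qed

lemma x0_pos: "x0 k > 0" by (simp add: x0_def)

lemma x0_sq: "x0 k ^ 2 = 1 / (8 + 8 * real k)"
  by (simp add: x0_def power_divide)

lemma x0_le: "k \<ge> 1 \<Longrightarrow> x0 k \<le> 1/4"
proof -
  assume "k \<ge> 1"
  then have "(1::real)/(8 + 8*real k) \<le> 1/16" by (intro divide_left_mono) auto
  then have "x0 k ^ 2 \<le> (1/4)^2" unfolding x0_sq by (simp add: power2_eq_square)
  then show ?thesis by (rule power2_le_imp_le) simp
qed

lemma x0_sq_le: "k \<ge> 1 \<Longrightarrow> 1 / (8 + 8 * real k) \<le> x0 k / 4"
proof -
  assume "k \<ge> 1"
  have "1 / (8 + 8 * real k) = x0 k * x0 k" using x0_sq[of k] by (simp add: power2_eq_square)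
  also have "\<dots> \<le> x0 k * (1/4)" using x0_le[of k] x0_pos[of k] \<open>k \<ge> 1\<close> by (intro mult_left_mono) auto
  finally show ?thesis by simp
qed

lemma eps_bound: assumes "k \<ge> 2" shows "Ck k * x0 k ^ (2*k) \<le> 1 / (32 * (real k + 1))"
proof -
  have xp: "x0 k ^ (2*k) = 1 / (8 + 8 * real k) ^ k"
  proof -
    have "x0 k ^ (2*k) = (x0 k ^ 2) ^ k" by (rule power_mult)
    also have "\<dots> = (1 / (8 + 8 * real k)) ^ k" by (simp only: x0_sq)
    also have "\<dots> = 1 / (8 + 8 * real k) ^ k" by (rule power_one_over)
    finally show ?thesis .
  qed
  have "4 * (2 * real k) ^ (k-1) \<le> 4 ^ (k-1) * (2 * real k) ^ (k-1)"
  proof -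
    have "(4::real) \<le> 4 ^ (k-1)" using power_increasing[of 1 "k-1" "4::real"] assms by simp
    then show ?thesis by (intro mult_right_mono) auto
  qed
  also have "\<dots> = (4 * (2 * real k)) ^ (k-1)" by (rule power_mult_distrib[symmetric])
  also have "\<dots> = (8 * real k) ^ (k-1)" by simp
  also have "\<dots> \<le> (8 + 8 * real k) ^ (k-1)" by (intro power_mono) auto
  finally have A: "4 * (2 * real k) ^ (k-1) \<le> (8 + 8 * real k) ^ (k-1)" .
  have B: "(8 + 8 * real k) ^ k = (8 + 8 * real k) * (8 + 8 * real k) ^ (k-1)"
    using assms by (cases k) auto
  have "Ck k * 32 * (real k + 1) \<le> (2 * real k) ^ (k-1) * 32 * (real k + 1)"
    using Ck_le[of k] assms by (intro mult_right_mono) auto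
  also have "\<dots> = (8 + 8 * real k) * (4 * (2 * real k) ^ (k-1))"
  proof -
    have "\<And>y::real. y * 32 * (real k + 1) = (8 + 8 * real k) * (4 * y)" by (simp add: algebra_simps)
    then show ?thesis by blast
  qed
  also have "\<dots> \<le> (8 + 8 * real k) * (8 + 8 * real k) ^ (k-1)"
    using A by (intro mult_left_mono) auto
  also have "\<dots> = (8 + 8 * real k) ^ k" using B by simp
  finally have "Ck k * 32 * (real k + 1) \<le> (8 + 8 * real k) ^ k" .
  then have H: "Ck k * (32 * (real k + 1)) \<le> (8 + 8 * real k) ^ k" by (simp add: mult.assoc)
  have P: "(8 + 8 * real k) ^ k > 0" by simp
  have "Ck k * x0 k ^ (2*k) = (Ck k * (32 * (real k + 1))) / ((8 + 8 * real k) ^ k * (32 * (real k + 1)))"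
    unfolding xp by simp
  also have "\<dots> \<le> (8 + 8 * real k) ^ k / ((8 + 8 * real k) ^ k * (32 * (real k + 1)))"
    using H P by (intro divide_right_mono) auto
  also have "\<dots> = 1 / (32 * (real k + 1))" using P by simp
  finally show ?thesis .
qed

lemma norm_Pw: fixes z w :: "'a::real_normed_field"
  assumes "norm z \<le> r" "norm w \<le> r"
  shows "norm (Pw n z w) \<le> real n * r ^ (n - 1)"
proof -
  have r0: "r \<ge> 0" using assms(1) norm_ge_zero order.trans by blast
  have "norm (Pw n z w) \<le> (\<Sum>i<n. norm (w^(n - Suc i) * z^i))"
    unfolding Pw_def by (rule norm_sum)
  also have "\<dots> \<le> (\<Sum>i<n. r ^ (n - 1))"
  proof (intro sum_mono)
    fix i assume "i \<in> {..<n}"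
    then have "n - Suc i + i = n - 1" by auto
    have "norm (w^(n - Suc i) * z^i) = norm w ^ (n - Suc i) * norm z ^ i"
      by (simp add: norm_mult norm_power)
    also have "\<dots> \<le> r ^ (n - Suc i) * r ^ i"
      using assms r0 by (intro mult_mono power_mono) auto
    also have "\<dots> = r ^ (n - 1)" using \<open>n - Suc i + i = n - 1\<close> by (simp add: power_add[symmetric])
    finally show "norm (w^(n - Suc i) * z^i) \<le> r ^ (n - 1)" .
  qed
  finally show ?thesis by simp
qed

definition VV :: "nat \<Rightarrow> 'a::comm_ring_1 \<Rightarrow> 'a \<Rightarrow> 'a \<Rightarrow> 'a" where
  "VV k c e z = 4 * c * (Pw (2*k+1) z e - Pw (2*k+2) z e - c * Pw (4*k+2) z e)"

lemma Dd_VV: "Dd k c e z = -2 - (7 + 8 * of_nat k) * (z + e) + VV k c e z"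
  by (simp add: Dd_def VV_def)

lemma VV_bound: fixes z w :: "'a::real_normed_field"
  assumes k: "k \<ge> 2" and z: "norm z \<le> x0 k" and w: "norm w \<le> x0 k"
  shows "norm (VV k (of_real (Ck k)) w z) \<le> 1/2"
proof -
  define x where "x = x0 k"
  define C where "C = Ck k"
  define \<epsilon> where "\<epsilon> = C * x ^ (2*k)"
  have x: "0 < x" "x \<le> 1/4" using x0_pos x0_le k by (auto simp: x_def)
  have C: "C > 0" using Ck_pos by (simp add: C_def)
  have e0: "\<epsilon> \<ge> 0" using x C by (simp add: \<epsilon>_def)
  have e1: "\<epsilon> * (32 * (real k + 1)) \<le> 1" using eps_bound[OF k] by (simp add: \<epsilon>_def C_def x_def field_simps)
  have P1: "norm (Pw (2*k+1) z w) \<le> real (2*k+1) * x ^ (2*k)"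
    using norm_Pw[OF z w, of "2*k+1"] by (simp add: x_def)
  have P2: "norm (Pw (2*k+2) z w) \<le> real (2*k+2) * x ^ (2*k+1)"
    using norm_Pw[OF z w, of "2*k+2"] by (simp add: x_def)
  have P3: "norm (Pw (4*k+2) z w) \<le> real (4*k+2) * x ^ (4*k+1)"
    using norm_Pw[OF z w, of "4*k+2"] by (simp add: x_def)
  have "norm (VV k (of_real C) w z) \<le> 4 * C * (norm (Pw (2*k+1) z w) + norm (Pw (2*k+2) z w) + C * norm (Pw (4*k+2) z w))"
  proof -
    have "norm (Pw (2*k+1) z w - Pw (2*k+2) z w - of_real C * Pw (4*k+2) z w)
       \<le> norm (Pw (2*k+1) z w) + norm (Pw (2*k+2) z w) + C * norm (Pw (4*k+2) z w)"
    proof -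
      have "norm (Pw (2*k+1) z w - Pw (2*k+2) z w - of_real C * Pw (4*k+2) z w)
         \<le> norm (Pw (2*k+1) z w - Pw (2*k+2) z w) + norm (of_real C * Pw (4*k+2) z w)"
        by (rule norm_triangle_ineq4)
      moreover have "norm (Pw (2*k+1) z w - Pw (2*k+2) z w) \<le> norm (Pw (2*k+1) z w) + norm (Pw (2*k+2) z w)"
        by (rule norm_triangle_ineq4)
      moreover have "norm (of_real C * Pw (4*k+2) z w) = C * norm (Pw (4*k+2) z w)"
        using C by (simp add: norm_mult)
      ultimately show ?thesis by linarith
    qed
    then show ?thesis unfolding VV_def using C
      by (simp add: norm_mult)
  qed
  also have "\<dots> \<le> 4 * C * (real (2*k+1) * x ^ (2*k) + real (2*k+2) * x ^ (2*k+1) + C * (real (4*k+2) * x ^ (4*k+1)))"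
    using C P1 P2 P3 by (intro mult_left_mono add_mono) auto
  also have "\<dots> = 4 * \<epsilon> * real (2*k+1) + 4 * \<epsilon> * real (2*k+2) * x + 4 * \<epsilon> * \<epsilon> * real (4*k+2) * x"
  proof -
    have h1: "x ^ (2*k+1) = x^(2*k) * x" by simp
    have "4*k+1 = 2*k + 2*k + 1" by simp
    then have h2: "x ^ (4*k+1) = x^(2*k) * x^(2*k) * x" by (simp only: power_add power_one_right)
    show ?thesis unfolding h1 h2 \<epsilon>_def by (simp add: algebra_simps)
  qed
  also have "\<dots> \<le> 1/4 + 1/16 + 1/16"
  proof (intro add_mono)
    have "4 * \<epsilon> * real (2*k+1) * 4 \<le> \<epsilon> * (32 * (real k + 1))" using e0 by (simp add: algebra_simps)
    then show "4 * \<epsilon> * real (2*k+1) \<le> 1/4" using e1 by linarith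
    have "4 * \<epsilon> * real (2*k+2) \<le> 1/4" using e1 e0 by (simp add: algebra_simps)
    then have "4 * \<epsilon> * real (2*k+2) * x \<le> (1/4) * (1/4)"
      using x e0 by (intro mult_mono) auto
    then show "4 * \<epsilon> * real (2*k+2) * x \<le> 1/16" by simp
    have "\<epsilon> * 96 \<le> \<epsilon> * (32 * (real k + 1))" using k e0 by (intro mult_left_mono) auto
    then have e2: "\<epsilon> \<le> 1/96" using e1 by linarith
    have "4 * \<epsilon> * real (4*k+2) \<le> 1/2" using e1 e0 by (simp add: algebra_simps)
    then have "\<epsilon> * (4 * \<epsilon> * real (4*k+2)) \<le> (1/96) * (1/2)"
      using e0 e2 by (intro mult_mono) auto
    then have "4 * \<epsilon> * \<epsilon> * real (4*k+2) \<le> 1/4" by (simp add: algebra_simps)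
    then have "4 * \<epsilon> * \<epsilon> * real (4*k+2) * x \<le> (1/4) * (1/4)"
      using x e0 by (intro mult_mono) auto
    then show "4 * \<epsilon> * \<epsilon> * real (4*k+2) * x \<le> 1/16" by simp
  qed
  finally show ?thesis by (simp add: C_def)
qed

lemma isCont_Dl: "isCont (Dl k c) (x::real)"
  unfolding Dl_def by (intro continuous_intros)

lemma isCont_Dd: "isCont (Dd k c e) (x::real)"
  unfolding Dd_def Pw_def by (intro continuous_intros)

lemma Dd_neg:
  assumes k: "k \<ge> 2" and "0 \<le> x" "x \<le> x0 k" "0 \<le> y" "y \<le> x0 k"
  shows "Dd k (Ck k) x y \<le> -3/2 - (7 + 8 * real k) * (y + x)"
proof -
  have "norm (VV k (of_real (Ck k)) x y) \<le> 1/2"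
    by (rule VV_bound[OF k]) (use assms in auto)
  then have "VV k (Ck k) x y \<le> 1/2" by simp
  then show ?thesis unfolding Dd_VV by simp
qed

lemma Dl_dec:
  assumes k: "k \<ge> 2" and "0 \<le> x" "x < y" "y \<le> x0 k"
  shows "Dl k (Ck k) y < Dl k (Ck k) x"
proof -
  have "Dd k (Ck k) x y \<le> -3/2 - (7 + 8 * real k) * (y + x)"
    by (rule Dd_neg) (use assms in auto)
  also have "\<dots> < 0"
  proof -
    have "(7 + 8 * real k) * (y + x) \<ge> 0" using assms by simp
    then show ?thesis by linarith
  qed
  finally have "Dd k (Ck k) x y < 0" .
  then have "(y - x) * Dd k (Ck k) x y < 0" using assms by (simp add: mult_pos_neg)
  then show ?thesis using Dl_diff[of k "Ck k" y x] by simp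
qed

lemma Dl_0: "Dl k c 0 = 1" by (simp add: Dl_def)

lemma Dl_x0: assumes k: "k \<ge> 2" shows "Dl k (Ck k) (x0 k) < 0"
proof -
  define x where "x = x0 k"
  define C where "C = Ck k"
  define \<epsilon> where "\<epsilon> = C * x ^ (2*k)"
  have x: "0 < x" "x \<le> 1/4" using x0_pos x0_le k by (auto simp: x_def)
  have C: "C > 0" using Ck_pos by (simp add: C_def)
  have e0: "\<epsilon> \<ge> 0" using x C by (simp add: \<epsilon>_def)
  have e1: "\<epsilon> \<le> 1 / (32 * (real k + 1))" using eps_bound[OF k] by (simp add: \<epsilon>_def C_def x_def)
  have e2: "\<epsilon> \<le> 1/32"
  proof -
    have "1 / (32 * (real k + 1)) \<le> 1/32" by (intro divide_left_mono) auto
    then show ?thesis using e1 by linarith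
  qed
  have sq: "(7 + 8 * real k) * x^2 = 1 - 1 / (8 + 8 * real k)"
    unfolding x_def x0_sq by (simp add: field_simps)
  have s2: "1 / (8 + 8 * real k) \<le> x / 4" using x0_sq_le[of k] k by (simp add: x_def)
  have "4 * x^(2*k+1) * C * (1 - x - C * x^(2*k+1)) = 4 * x * \<epsilon> * (1 - x - \<epsilon> * x)"
    unfolding \<epsilon>_def by (simp add: algebra_simps)
  also have "\<dots> \<le> 4 * x * \<epsilon> * 1"
  proof -
    have "0 \<le> \<epsilon> * x" using x e0 by simp
    then have h: "1 - x - \<epsilon> * x \<le> 1" using x by linarith
    show ?thesis by (rule mult_left_mono[OF h]) (use x e0 in simp)
  qed
  also have "\<dots> \<le> 4 * x * (1/32)" using x e2 by simp
  finally have t: "4 * x^(2*k+1) * C * (1 - x - C * x^(2*k+1)) \<le> x / 8" by simp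
  have "Dl k C x = 1 - 2*x - (7 + 8 * real k) * x^2 + 4 * x^(2*k+1) * C * (1 - x - C * x^(2*k+1))"
    by (simp add: Dl_def)
  also have "\<dots> \<le> x / 4 - 2 * x + x / 8" using sq s2 t by linarith
  also have "\<dots> < 0" using x by simp
  finally show ?thesis by (simp add: x_def C_def)
qed

lemma eta_props:
  assumes k: "k \<ge> 2"
  shows "0 < eta k" "eta k < x0 k" "Delta k (eta k) = 0"
proof -
  have ex: "\<exists>x. 0 \<le> x \<and> x \<le> x0 k \<and> Dl k (Ck k) x = 0"
    by (rule IVT2) (use Dl_x0[OF k] Dl_0[of k "Ck k"] x0_pos[of k] isCont_Dl in auto)
  then obtain x where x: "0 \<le> x" "x \<le> x0 k" "Dl k (Ck k) x = 0" by blast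
  have "x \<noteq> 0" using x Dl_0[of k "Ck k"] by auto
  moreover have "x \<noteq> x0 k" using x Dl_x0[OF k] by auto
  ultimately have x': "0 < x" "x < x0 k" using x by auto
  have uniq: "y = x" if "0 < y" "y < x0 k" "Dl k (Ck k) y = 0" for y
  proof (rule ccontr)
    assume "y \<noteq> x"
    then consider "y < x" | "x < y" by linarith
    then show False
    proof cases
      case 1 then show ?thesis using Dl_dec[OF k, of y x] that x x' by auto
    next
      case 2 then show ?thesis using Dl_dec[OF k, of x y] that x x' by auto
    qed
  qed
  have "\<exists>!x. 0 < x \<and> x < 1 / sqrt (8 + 8 * real k) \<and> Delta k x = 0"
    using x x' uniq unfolding Delta_Dl x0_def[symmetric] by blast
  then have "0 < eta k \<and> eta k < 1 / sqrt (8 + 8 * real k) \<and> Delta k (eta k) = 0"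
    unfolding eta_def by (rule theI')
  then show "0 < eta k" "eta k < x0 k" "Delta k (eta k) = 0" by (auto simp: x0_def)
qed

lemma deriv_Delta: "deriv (Delta k) e = Dd k (Ck k) e e"
proof -
  have "DERIV (Delta k) e :> Dd k (Ck k) e e"
    unfolding CARAT_DERIV
    by (rule exI[of _ "Dd k (Ck k) e"]) (auto simp: Delta_Dl Dl_diff isCont_Dd mult.commute)
  then show ?thesis by (rule DERIV_imp_deriv)
qed

lemma psi_eq: "psi k = - eta k * Dd k (Ck k) (eta k) (eta k)"
  by (simp add: psi_def deriv_Delta)

lemma psi_pos: assumes k: "k \<ge> 2" shows "psi k > 0"
proof -
  have e: "0 < eta k" "eta k < x0 k" using eta_props[OF k] by auto
  have "Dd k (Ck k) (eta k) (eta k) \<le> -3/2 - (7 + 8 * real k) * (eta k + eta k)"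
    by (rule Dd_neg[OF k]) (use e in auto)
  also have "\<dots> < 0"
  proof -
    have "(7 + 8 * real k) * (eta k + eta k) \<ge> 0" using e by simp
    then show ?thesis by linarith
  qed
  finally show ?thesis unfolding psi_eq using e by (simp add: mult_pos_neg)
qed

lemma Re_Dd_bound:
  fixes z :: complex
  assumes k: "k \<ge> 2" and e: "0 < e" "e < x0 k" and z: "norm z < min (x0 k) (e + 1 / (7 + 8 * real k))"
  shows "Re (- Dd k (of_real (Ck k)) (of_real e) z) > 0"
proof -
  have "norm (VV k (of_real (Ck k)) (of_real e) z) \<le> 1/2"
    by (rule VV_bound[OF k]) (use e z in auto)
  then have v: "Re (VV k (of_real (Ck k)) (of_real e) z) \<le> 1/2"
    using complex_Re_le_cmod order.trans by blast
  have "- Re z \<le> norm z" using abs_Re_le_cmod[of z] by linarith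
  then have "Re z > - e - 1 / (7 + 8 * real k)" using z by auto
  then have "(7 + 8 * real k) * (Re z + e) > (7 + 8 * real k) * (- 1 / (7 + 8 * real k))"
    by (intro mult_strict_left_mono) auto
  then have r: "(7 + 8 * real k) * (Re z + e) > -1" by simp
  have "Re (- Dd k (of_real (Ck k)) (of_real e) z) = 2 + (7 + 8 * real k) * (Re z + e) - Re (VV k (of_real (Ck k)) (of_real e) z)"
    unfolding Dd_VV by simp
  then show ?thesis using v r by linarith
qed

definition rho :: "nat \<Rightarrow> real" where
  "rho k = min (x0 k) (eta k + 1 / (7 + 8 * real k))"

definition Qc :: "nat \<Rightarrow> complex \<Rightarrow> complex" where
  "Qc k z = - of_real (eta k) * Dd k (of_real (Ck k)) (of_real (eta k)) z"

definition GG :: "nat \<Rightarrow> complex \<Rightarrow> complex" where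
  "GG k z = csqrt (Qc k z)"

definition FF :: "nat \<Rightarrow> complex fps" where
  "FF k = Abs_fps (\<lambda>n. (deriv ^^ n) (GG k) 0 / fact n)"

lemma rho_gt: "k \<ge> 2 \<Longrightarrow> eta k < rho k"
  using eta_props[of k] by (simp add: rho_def)

lemma eta_in_ball: "k \<ge> 2 \<Longrightarrow> of_real (eta k) \<in> ball (0::complex) (rho k)"
  using eta_props[of k] rho_gt[of k] by simp

lemma Re_Qc: assumes k: "k \<ge> 2" and z: "z \<in> ball 0 (rho k)" shows "Re (Qc k z) > 0"
proof -
  have e: "0 < eta k" "eta k < x0 k" using eta_props[OF k] by auto
  have "Re (- Dd k (of_real (Ck k)) (of_real (eta k)) z) > 0"
    by (rule Re_Dd_bound[OF k e]) (use z in \<open>simp add: rho_def\<close>)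
  moreover have "Re (Qc k z) = eta k * Re (- Dd k (of_real (Ck k)) (of_real (eta k)) z)"
    by (simp add: Qc_def)
  ultimately show ?thesis using e by (simp add: mult_pos_neg)
qed

lemma Qc_holo: "Qc k holomorphic_on S"
  unfolding Qc_def Dd_def Pw_def by (intro holomorphic_intros)

lemma GG_holo: assumes k: "k \<ge> 2" shows "GG k holomorphic_on ball 0 (rho k)"
proof -
  have "(\<lambda>z. csqrt (Qc k z)) holomorphic_on ball 0 (rho k)"
  proof (rule holomorphic_on_csqrt')
    show "Qc k holomorphic_on ball 0 (rho k)" by (rule Qc_holo)
    fix z :: complex assume "z \<in> ball 0 (rho k)"
    then have "Re (Qc k z) > 0" by (rule Re_Qc[OF k])
    then show "Qc k z \<notin> \<real>\<^sub>\<le>\<^sub>0" by (auto simp: complex_nonpos_Reals_iff)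
  qed
  then show ?thesis by (simp add: GG_def[abs_def])
qed

lemma FF_sums: assumes k: "k \<ge> 2" and w: "w \<in> ball 0 (rho k)"
  shows "(\<lambda>n. FF k $ n * w ^ n) sums GG k w"
  using holomorphic_power_series[OF GG_holo[OF k] w] by (simp add: FF_def)

lemma GG_sq: "GG k z * GG k z = Qc k z"
  by (simp add: GG_def power2_eq_square[symmetric])

lemma FF_expansion: assumes k: "k \<ge> 2" shows "GG k has_fps_expansion FF k"
proof (rule has_fps_expansionI)
  have "rho k > 0" using rho_gt[OF k] eta_props[OF k] by simp
  then show "\<forall>\<^sub>F u in nhds 0. (\<lambda>n. FF k $ n * u ^ n) sums GG k u"
    unfolding eventually_nhds using FF_sums[OF k]
    by (intro exI[of _ "ball 0 (rho k)"]) auto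
qed

lemma Qc_expansion: assumes k: "k \<ge> 2" shows "Qc k has_fps_expansion FF k * FF k"
proof -
  have "(\<lambda>z. GG k z * GG k z) has_fps_expansion FF k * FF k"
    by (intro has_fps_expansion_mult FF_expansion[OF k])
  then show ?thesis by (simp add: GG_sq)
qed

definition qQ :: "nat \<Rightarrow> complex poly" where
  "qQ k = [:- of_real (eta k):] * Dd k [:of_real (Ck k):] [:of_real (eta k):] [:0, 1:]"

lemma fps_of_poly_of_nat: "fps_of_poly (of_nat n) = of_nat n"
  by (induction n) (simp_all add: fps_of_poly_add)

lemma poly_qQ: "poly (qQ k) z = Qc k z"
  unfolding qQ_def Qc_def Dd_def Pw_def
  by (simp only: poly_mult poly_add poly_diff poly_minus poly_sum poly_power poly_numeral poly_of_nat
      poly_pCons poly_0 mult_zero_right add_0_right add_0 mult_1_right)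

lemma fps_qQ: "fps_of_poly (qQ k) =
   - fps_const (of_real (eta k)) * Dd k (fps_const (of_real (Ck k))) (fps_const (of_real (eta k))) fps_X"
  unfolding qQ_def Dd_def Pw_def
  by (simp only: fps_of_poly_add fps_of_poly_diff fps_of_poly_mult fps_of_poly_sum fps_of_poly_numeral
      fps_of_poly_power fps_of_poly_const fps_of_poly_uminus fps_of_poly_of_nat fps_of_poly_fps_X fps_const_neg)

lemma Qc_expansion2:
  "Qc k has_fps_expansion (- fps_const (of_real (eta k)) * Dd k (fps_const (of_real (Ck k))) (fps_const (of_real (eta k))) fps_X)"
proof -
  have "eval_fps (fps_of_poly (qQ k)) has_fps_expansion fps_of_poly (qQ k)"
    by (rule eval_fps_has_fps_expansion) simp
  moreover have "eval_fps (fps_of_poly (qQ k)) = Qc k"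
    by (simp add: fun_eq_iff poly_qQ)
  ultimately show ?thesis by (simp add: fps_qQ)
qed

lemma FF_sq: assumes k: "k \<ge> 2" shows
  "FF k * FF k = - fps_const (of_real (eta k)) * Dd k (fps_const (of_real (Ck k))) (fps_const (of_real (eta k))) fps_X"
  using fps_expansion_unique_complex[OF Qc_expansion[OF k] Qc_expansion2] .

abbreviation "Ec k \<equiv> fps_const (complex_of_real (eta k))"
abbreviation "Cc k \<equiv> fps_const (complex_of_real (Ck k))"

definition AA :: "nat \<Rightarrow> complex fps" where
  "AA k = Abs_fps (\<lambda>n. of_real (((1/2::real) gchoose n) * (-1 / eta k)^n))"

definition SS :: "nat \<Rightarrow> complex fps" where "SS k = AA k * FF k"
definition TT :: "nat \<Rightarrow> complex fps" where "TT k = Bl k (Cc k) fps_X - SS k"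
definition RR :: "nat \<Rightarrow> complex fps" where "RR k = Abs_fps (\<lambda>n. TT k $ Suc n / 4)"

lemma one_gchoose: "((1::real) gchoose n) = (if n \<le> 1 then 1 else 0)"
proof -
  have "((1::real) gchoose n) = of_nat (1 choose n)"
    using binomial_gbinomial[of 1 n, where 'a = real] by simp
  then show ?thesis by (cases n) (auto simp: binomial_eq_0)
qed

lemma AA_sq: assumes e: "eta k \<noteq> 0"
  shows "AA k * AA k = 1 - fps_const (of_real (1 / eta k)) * fps_X"
proof (rule fps_ext)
  fix n
  define q where "q = -1 / eta k"
  have "(AA k * AA k) $ n = (\<Sum>i=0..n. of_real (((1/2::real) gchoose i) * ((1/2) gchoose (n - i)) * q ^ n))"
    unfolding fps_mult_nth AA_def q_def[symmetric]
    by (intro sum.cong refl) (simp add: power_add[symmetric])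
  also have "\<dots> = of_real ((\<Sum>i=0..n. ((1/2::real) gchoose i) * ((1/2) gchoose (n - i))) * q ^ n)"
    by (simp add: sum_distrib_right)
  also have "\<dots> = of_real (((1::real) gchoose n) * q ^ n)"
    using gbinomial_Vandermonde[of "1/2::real" "1/2" n] by simp
  also have "\<dots> = (1 - fps_const (of_real (1 / eta k)) * fps_X) $ n"
    unfolding one_gchoose q_def by (cases n) (auto simp: of_real_def)
  finally show "(AA k * AA k) $ n = (1 - fps_const (of_real (1 / eta k)) * fps_X) $ n" .
qed

lemma Dl_fps_const: "Dl k (fps_const c) (fps_const z) = fps_const (Dl k c z)"
  unfolding Dl_def
  by (simp only: fps_const_sub[symmetric] fps_const_add[symmetric] fps_const_mult[symmetric]
      fps_const_power[symmetric] fps_const_1_eq_1[symmetric] fps_numeral_fps_const fps_of_nat[symmetric])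

lemma Dl_of_real: "Dl k (of_real c) (of_real z) = (of_real (Dl k c z) :: complex)"
  by (simp add: Dl_def)

lemma Dfps_eq: assumes k: "k \<ge> 2"
  shows "Dl k (Cc k) fps_X = (1 - fps_const (of_real (1 / eta k)) * fps_X) * (FF k * FF k)"
proof -
  have e: "eta k \<noteq> 0" using eta_props[OF k] by simp
  have "Dl k (Cc k) (Ec k) = 0"
    unfolding Dl_fps_const Dl_of_real Delta_Dl[symmetric] eta_props(3)[OF k] by simp
  then have "Dl k (Cc k) fps_X = (fps_X - Ec k) * Dd k (Cc k) (Ec k) fps_X"
    using Dl_diff[of k "Cc k" fps_X "Ec k"] by simp
  also have "\<dots> = (1 - fps_const (of_real (1 / eta k)) * fps_X) * (- Ec k * Dd k (Cc k) (Ec k) fps_X)"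
  proof -
    have "fps_const (complex_of_real (1 / eta k)) * Ec k = 1"
      using e by (simp add: of_real_def flip: fps_const_mult)
    then have "(1 - fps_const (of_real (1 / eta k)) * fps_X) * (- Ec k) = fps_X - Ec k"
      by (simp add: algebra_simps)
    then show ?thesis by (simp only: mult.assoc[symmetric])
  qed
  also have "\<dots> = (1 - fps_const (of_real (1 / eta k)) * fps_X) * (FF k * FF k)"
    using FF_sq[OF k] by simp
  finally show ?thesis .
qed

lemma SS_sq: assumes k: "k \<ge> 2" shows "SS k * SS k = Dl k (Cc k) fps_X"
proof -
  have e: "eta k \<noteq> 0" using eta_props[OF k] by simp
  have "SS k * SS k = (AA k * AA k) * (FF k * FF k)" by (simp add: SS_def algebra_simps)
  then show ?thesis using AA_sq[OF e] Dfps_eq[OF k] by simp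
qed

lemma Qc_0: assumes k: "k \<ge> 2" shows "Qc k 0 = 1"
proof -
  have "Dl k (of_real (Ck k)) (0::complex) - Dl k (of_real (Ck k)) (of_real (eta k))
        = (0 - of_real (eta k)) * Dd k (of_real (Ck k)) (of_real (eta k)) 0"
    by (rule Dl_diff)
  moreover have "Dl k (of_real (Ck k)) (of_real (eta k)) = (0::complex)"
    unfolding Dl_of_real Delta_Dl[symmetric] eta_props(3)[OF k] by simp
  ultimately show ?thesis by (simp add: Qc_def Dl_0)
qed

lemma TT_0: assumes k: "k \<ge> 2" shows "TT k $ 0 = 0"
proof -
  have "FF k $ 0 = 1" using Qc_0[OF k] by (simp add: FF_def GG_def)
  moreover have "AA k $ 0 = 1" by (simp add: AA_def)
  ultimately have "SS k $ 0 = 1" by (simp add: SS_def fps_mult_nth)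
  moreover have "Bl k (Cc k) fps_X $ 0 = 1" by (simp add: Bl_def)
  ultimately show ?thesis by (simp add: TT_def)
qed

lemma TT_RR: assumes k: "k \<ge> 2" shows "TT k = 4 * (fps_X * RR k)"
proof (rule fps_ext)
  fix n show "TT k $ n = (4 * (fps_X * RR k)) $ n"
    using TT_0[OF k] by (cases n) (simp_all add: RR_def fps_mult_numeral_left)
qed

lemma quad_aux:
  fixes b t d x w r :: "'a::idom"
  assumes "(b - t)^2 = d" "b^2 - d = 8 * x * w" "t = 4 * (x * r)" "x \<noteq> 0" "(8::'a) \<noteq> 0"
  shows "2 * x * r^2 - b * r + w = 0"
proof -
  have "8 * x * (2 * x * r^2 - b * r + w) = t^2 - 2*b*t + (b^2 - d)"
    using assms(2,3) by (simp add: algebra_simps power2_eq_square)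
  also have "\<dots> = (b - t)^2 - d" by (simp add: algebra_simps power2_eq_square)
  also have "\<dots> = 0" using assms(1) by simp
  finally show ?thesis using assms(4,5) by simp
qed

lemma fps_8_ne: "(8::complex fps) \<noteq> 0"
proof
  assume "(8::complex fps) = 0"
  then have "(8::complex fps) $ 0 = 0" by simp
  then show False by (simp add: fps_numeral_nth)
qed

lemma RR_eq: assumes k: "k \<ge> 2"
  shows "RR k = 2 * (fps_X * (RR k * RR k)) + fps_X * RR k - 2 * (Cc k * (fps_X ^ (2*k+1) * RR k))
     + (of_nat k + 1) * fps_X + Cc k ^ 2 * fps_X ^ (4*k+1)"
proof -
  have "(Bl k (Cc k) fps_X - TT k)^2 = Dl k (Cc k) fps_X"
    using SS_sq[OF k] by (simp add: TT_def power2_eq_square)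
  from quad_aux[OF this Bl_Dl TT_RR[OF k] fps_X_neq_zero fps_8_ne]
  have "2 * fps_X * (RR k)^2 - Bl k (Cc k) fps_X * RR k + ((of_nat k + 1) * fps_X + Cc k ^ 2 * fps_X ^ (4*k+1)) = 0"
    by simp
  then show ?thesis unfolding Bl_def by (simp add: algebra_simps power2_eq_square)
qed

lemma RR_nth: assumes k: "k \<ge> 2"
  shows "RR k $ 0 = 0"
    "RR k $ Suc m = 2 * (\<Sum>i=0..m. RR k $ i * RR k $ (m - i)) + RR k $ m
        - 2 * of_real (Ck k) * (if 2*k \<le> m then RR k $ (m - 2*k) else 0)
        + (if m = 0 then of_nat k + 1 else 0) + (if m = 4*k then of_real (Ck k) ^ 2 else 0)"
proof -
  have e1: "((of_nat k + 1) * fps_X :: complex fps) = fps_const (of_nat k + 1) * fps_X"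
    by (simp add: fps_of_nat[symmetric])
  have e2: "(Cc k ^ 2 * fps_X ^ (4*k+1)) = fps_const (of_real (Ck k) ^ 2) * fps_X ^ (4*k+1)"
    by simp
  note eq = RR_eq[OF k, unfolded e1 e2]
  have "RR k $ 0 = (2 * (fps_X * (RR k * RR k)) + fps_X * RR k - 2 * (Cc k * (fps_X ^ (2*k+1) * RR k))
     + fps_const (of_nat k + 1) * fps_X + fps_const (of_real (Ck k) ^ 2) * fps_X ^ (4*k+1)) $ 0"
    using eq by metis
  also have "\<dots> = 0" by (simp add: fps_mult_numeral_left fps_X_power_mult_nth)
  finally show "RR k $ 0 = 0" .
  have "RR k $ Suc m = (2 * (fps_X * (RR k * RR k)) + fps_X * RR k - 2 * (Cc k * (fps_X ^ (2*k+1) * RR k))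
     + fps_const (of_nat k + 1) * fps_X + fps_const (of_real (Ck k) ^ 2) * fps_X ^ (4*k+1)) $ Suc m"
    using eq by metis
  also have "\<dots> = 2 * ((RR k * RR k) $ m) + RR k $ m
        - 2 * of_real (Ck k) * (if 2*k \<le> m then RR k $ (m - 2*k) else 0)
        + (if m = 0 then of_nat k + 1 else 0) + (if m = 4*k then of_real (Ck k) ^ 2 else 0)"
  proof -
    have h1: "(fps_X ^ (2*k+1) * RR k) $ Suc m = (if 2*k \<le> m then RR k $ (m - 2*k) else 0)"
      unfolding fps_X_power_mult_nth by auto
    have h2: "(fps_X ^ (4*k+1) :: complex fps) $ Suc m = (if m = 4*k then 1 else 0)"
      unfolding fps_X_power_nth by auto
    have h3: "(fps_X :: complex fps) $ Suc m = (if m = 0 then 1 else 0)" by simp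
    have h4: "\<And>f::complex fps. (fps_X * f) $ Suc m = f $ m" by simp
    show ?thesis
      unfolding fps_add_nth fps_sub_nth fps_mult_numeral_left fps_mult_left_const_nth h1 h2 h3 h4
      by simp
  qed
  also have "(RR k * RR k) $ m = (\<Sum>i=0..m. RR k $ i * RR k $ (m - i))"
    by (rule fps_mult_nth)
  finally show "RR k $ Suc m = 2 * (\<Sum>i=0..m. RR k $ i * RR k $ (m - i)) + RR k $ m
        - 2 * of_real (Ck k) * (if 2*k \<le> m then RR k $ (m - 2*k) else 0)
        + (if m = 0 then of_nat k + 1 else 0) + (if m = 4*k then of_real (Ck k) ^ 2 else 0)" .
qed

lemma cc_rec2: assumes k: "k \<ge> 1"
  shows "cc k (Suc m) = 2 * (\<Sum>i=0..m. cc k i * cc k (m - i)) + cc k m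
        - 2 * Ck k * (if 2*k \<le> m then cc k (m - 2*k) else 0)
        + (if m = 0 then real k + 1 else 0) + (if m = 4*k then Ck k ^ 2 else 0)"
proof -
  define a where "a = cc k"
  define C where "C = Ck k"
  have sig: "sig k i = (if i = 2*k then C else 0)" for i by (simp add: sig_def C_def)
  have s1: "(\<Sum>i\<le>m. sig k i * a (m - i)) = (if 2*k \<le> m then C * a (m - 2*k) else 0)"
  proof -
    have "(\<Sum>i\<le>m. sig k i * a (m - i)) = (\<Sum>i\<le>m. (if i = 2*k then C * a (m - 2*k) else 0))"
      by (intro sum.cong refl) (auto simp: sig)
    also have "\<dots> = (if 2*k \<le> m then C * a (m - 2*k) else 0)"
      by (cases "2*k \<le> m") (simp_all add: sum.delta)
    finally show ?thesis .
  qed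
  have s2: "(\<Sum>i\<le>m. a i * sig k (m - i)) = (if 2*k \<le> m then C * a (m - 2*k) else 0)"
  proof -
    have "(\<Sum>i\<le>m. a i * sig k (m - i)) = (\<Sum>i\<le>m. (if 2*k \<le> m \<and> i = m - 2*k then C * a (m - 2*k) else 0))"
      by (intro sum.cong refl) (auto simp: sig)
    also have "\<dots> = (if 2*k \<le> m then C * a (m - 2*k) else 0)"
      by (cases "2*k \<le> m") (simp_all add: sum.delta')
    finally show ?thesis .
  qed
  have s3: "(\<Sum>i\<le>m. sig k i * sig k (m - i)) = (if m = 4*k then C^2 else 0)"
  proof -
    have "(\<Sum>i\<le>m. sig k i * sig k (m - i)) = (\<Sum>i\<le>m. (if m = 4*k \<and> i = 2*k then C^2 else 0))"
      by (intro sum.cong refl) (auto simp: sig power2_eq_square)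
    also have "\<dots> = (if m = 4*k then C^2 else 0)"
      by (cases "m = 4*k") (simp_all add: sum.delta')
    finally show ?thesis .
  qed
  have "(\<Sum>i\<le>m. (a i - sig k i) * (a (m-i) - sig k (m-i)))
     = (\<Sum>i\<le>m. a i * a (m-i)) - (\<Sum>i\<le>m. sig k i * a (m - i)) - (\<Sum>i\<le>m. a i * sig k (m - i))
       + (\<Sum>i\<le>m. sig k i * sig k (m - i))"
    by (simp add: algebra_simps sum.distrib sum_subtractf)
  also have "\<dots> = (\<Sum>i\<le>m. a i * a (m-i)) - 2 * C * (if 2*k \<le> m then a (m - 2*k) else 0)
       + (if m = 4*k then C^2 else 0)"
    unfolding s1 s2 s3 by simp
  finally have P: "(\<Sum>i\<le>m. (a i - sig k i) * (a (m-i) - sig k (m-i))) = \<dots>" .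
  show ?thesis
    using cc_rec[OF k, of m] P unfolding a_def[symmetric] C_def[symmetric]
    by (simp add: atMost_atLeast0)
qed

lemma RR_cc: assumes k: "k \<ge> 2" shows "RR k $ n = of_real (cc k n)"
proof (induction n rule: less_induct)
  case (less n)
  show ?case
  proof (cases n)
    case 0 then show ?thesis using RR_nth(1)[OF k] cc_0 by simp
  next
    case (Suc m)
    have IH: "RR k $ i = of_real (cc k i)" if "i \<le> m" for i using less Suc that by auto
    have "RR k $ Suc m = 2 * (\<Sum>i=0..m. of_real (cc k i) * of_real (cc k (m - i))) + of_real (cc k m)
        - 2 * of_real (Ck k) * (if 2*k \<le> m then of_real (cc k (m - 2*k)) else 0)
        + (if m = 0 then of_nat k + 1 else 0) + (if m = 4*k then of_real (Ck k) ^ 2 else 0)"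
    proof -
      have "(\<Sum>i=0..m. RR k $ i * RR k $ (m - i)) = (\<Sum>i=0..m. of_real (cc k i) * of_real (cc k (m - i)))"
        by (intro sum.cong refl) (simp add: IH)
      then show ?thesis unfolding RR_nth(2)[OF k] using IH by simp
    qed
    also have "\<dots> = of_real (cc k (Suc m))"
    proof -
      have k1: "k \<ge> 1" using k by simp
      show ?thesis unfolding cc_rec2[OF k1, of m] by simp
    qed
    finally show ?thesis using Suc by simp
  qed
qed

definition alpha :: "nat \<Rightarrow> real" where
  "alpha m = ((1/2::real) gchoose m) * (-1)^m"

lemma g_Suc: "((1/2::real) gchoose Suc m) = ((1/2::real) gchoose m) * (1/2 - real m) / (real m + 1)"
proof -
  have "((1/2::real) gchoose Suc m) * fact (Suc m) = ((1/2::real) gchoose m) * fact m * (1/2 - real m)"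
    unfolding gbinomial_mult_fact' by (simp add: atLeast0_lessThan_Suc)
  then have "(((1/2::real) gchoose Suc m) * (real m + 1)) * fact m = (((1/2::real) gchoose m) * (1/2 - real m)) * fact m"
    by (simp add: algebra_simps)
  then have "((1/2::real) gchoose Suc m) * (real m + 1) = ((1/2::real) gchoose m) * (1/2 - real m)"
    using mult_right_cancel[of "fact m :: real"] by simp
  then show ?thesis by (simp add: field_simps)
qed

lemma alpha_Suc: "alpha (Suc m) = alpha m * (real m - 1/2) / (real m + 1)"
  unfolding alpha_def g_Suc by (simp add: field_simps)

lemma alpha_0: "alpha 0 = 1" by (simp add: alpha_def)
lemma alpha_1: "alpha 1 = -1/2" by (simp add: alpha_def)

lemma alpha_ne: "alpha m \<noteq> 0"
proof (induction m)
  case 0 then show ?case by (simp add: alpha_0)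
next
  case (Suc m)
  have "real m - 1/2 \<noteq> 0"
  proof
    assume "real m - 1/2 = 0"
    then have "2 * real m = 1" by simp
    then have "2 * m = 1" by (metis of_nat_1 of_nat_eq_iff of_nat_mult of_nat_numeral)
    then show False by presburger
  qed
  then show ?case using Suc by (simp add: alpha_Suc)
qed

lemma alpha_mono: assumes "1 \<le> p" "p \<le> n" shows "\<bar>alpha p\<bar> * real p ^ 2 \<le> \<bar>alpha n\<bar> * real n ^ 2"
  using assms(2)
proof (induction n rule: dec_induct)
  case base then show ?case by simp
next
  case (step n)
  have n1: "real n \<ge> 1" using step assms by simp
  have "\<bar>alpha (Suc n)\<bar> = \<bar>alpha n\<bar> * (real n - 1/2) / (real n + 1)"
    using n1 by (simp add: alpha_Suc abs_mult abs_divide)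
  then have "\<bar>alpha (Suc n)\<bar> * real (Suc n) ^ 2 = \<bar>alpha n\<bar> * (real n - 1/2) / (real n + 1) * (real n + 1)^2"
    by simp
  also have "\<dots> = \<bar>alpha n\<bar> * ((real n - 1/2) * (real n + 1))"
  proof -
    have "real n + 1 \<noteq> 0" by simp
    then show ?thesis by (simp add: power2_eq_square field_simps)
  qed
  finally have "\<bar>alpha (Suc n)\<bar> * real (Suc n) ^ 2 = \<bar>alpha n\<bar> * ((real n - 1/2) * (real n + 1))" .
  also have "\<dots> \<ge> \<bar>alpha n\<bar> * real n ^ 2"
    using n1 by (intro mult_left_mono) (auto simp: power2_eq_square algebra_simps)
  finally show ?case using step by linarith
qed

lemma alpha_ratio_bound: assumes "j \<le> n"
  shows "\<bar>alpha (n - j) / alpha n\<bar> \<le> 2 * (real j + 1)^2"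
proof (cases "j < n")
  case True
  have p: "1 \<le> n - j" using True by simp
  have "\<bar>alpha (n - j)\<bar> * real (n - j) ^ 2 \<le> \<bar>alpha n\<bar> * real n ^ 2"
    by (rule alpha_mono[OF p]) simp
  moreover have "real n \<le> (real j + 1) * real (n - j)"
  proof -
    have "real n = real j + real (n - j)" using True by simp
    also have "\<dots> \<le> real j * real (n - j) + real (n - j)"
    proof -
      have "real j * 1 \<le> real j * real (n - j)" using p by (intro mult_left_mono) auto
      then show ?thesis using True by (simp add: of_nat_diff)
    qed
    finally show ?thesis by (simp add: algebra_simps)
  qed
  ultimately have "\<bar>alpha (n - j)\<bar> * real (n - j) ^ 2 \<le> \<bar>alpha n\<bar> * ((real j + 1) * real (n - j))^2"
    by (smt (verit) abs_ge_zero mult_left_mono of_nat_0_le_iff power_mono)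
  then have "\<bar>alpha (n - j)\<bar> * real (n - j) ^ 2 \<le> (\<bar>alpha n\<bar> * (real j + 1)^2) * real (n - j) ^ 2"
    by (simp only: power_mult_distrib mult.assoc)
  then have "\<bar>alpha (n - j)\<bar> \<le> \<bar>alpha n\<bar> * (real j + 1)^2"
    using p by (subst (asm) mult_le_cancel_right_pos) auto
  also have "\<dots> \<le> \<bar>alpha n\<bar> * (2 * (real j + 1)^2)" by (intro mult_left_mono) auto
  finally show ?thesis using alpha_ne[of n] by (simp add: abs_divide divide_le_eq mult.commute)
next
  case False
  then have jn: "j = n" using assms by simp
  show ?thesis
  proof (cases "n = 0")
    case True then show ?thesis using jn by (simp add: alpha_0)
  next
    case False
    have "\<bar>alpha 1\<bar> * real 1 ^ 2 \<le> \<bar>alpha n\<bar> * real n ^ 2"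
      by (rule alpha_mono) (use False in auto)
    moreover have "\<bar>alpha (Suc 0)\<bar> = 1/2" using alpha_1 by simp
    ultimately have "1 \<le> \<bar>alpha n\<bar> * (2 * real n ^ 2)" by simp
    also have "\<dots> \<le> \<bar>alpha n\<bar> * (2 * (real j + 1) ^ 2)"
      using jn by (intro mult_left_mono) (auto intro!: power_mono)
    finally show ?thesis using jn alpha_ne[of n] by (simp add: alpha_0 abs_divide divide_le_eq mult.commute)
  qed
qed

lemma Gamma_minus_half: "Gamma (-1/2 :: real) = - 2 * sqrt pi"
proof -
  have "Gamma ((-1/2::real) + 1) = (-1/2) * Gamma (-1/2)"
  proof (rule Gamma_plus1)
    show "(-1/2::real) \<notin> \<int>\<^sub>\<le>\<^sub>0"
    proof
      assume "(-1/2::real) \<in> \<int>\<^sub>\<le>\<^sub>0"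
      then obtain n :: int where "(-1/2::real) = of_int n" by (auto simp: nonpos_Ints_def)
      then have "real_of_int (2 * n) = -1" by simp
      then have "2 * n = -1" by linarith
      then show False by presburger
    qed
  qed
  then show ?thesis using Gamma_one_half_real by simp
qed

lemma alpha_asymp: "(\<lambda>n. alpha n * real n powr (3/2)) \<longlonglongrightarrow> - 1 / (2 * sqrt pi)"
proof -
  have "(\<lambda>n. ((1/2::real) gchoose n) / ((-1)^n / exp ((1/2+1) * of_real (ln (real n))))) \<longlonglongrightarrow> inverse (Gamma (- (1/2)))"
    by (rule gbinomial_asymptotic)
  moreover have "inverse (Gamma (- (1/2::real))) = - 1 / (2 * sqrt pi)"
    using Gamma_minus_half by (simp add: field_simps)
  moreover have "eventually (\<lambda>n. ((1/2::real) gchoose n) / ((-1)^n / exp ((1/2+1) * of_real (ln (real n)))) = alpha n * real n powr (3/2)) sequentially"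
    using eventually_gt_at_top[of "0::nat"]
  proof eventually_elim
    case (elim n)
    have "((-1::real)^n) * (-1)^n = 1" by (simp add: power_mult_distrib[symmetric])
    then show ?case using elim by (simp add: alpha_def powr_def field_simps)
  qed
  ultimately show ?thesis using Lim_transform_eventually by fastforce
qed

lemma alpha_ratio_lim: "(\<lambda>n. alpha (n - j) / alpha n) \<longlonglongrightarrow> 1"
proof -
  define \<beta> where "\<beta> n = alpha n * real n powr (3/2)" for n
  define L where "L = - 1 / (2 * sqrt pi)"
  have L: "L \<noteq> 0" by (simp add: L_def)
  have b: "\<beta> \<longlonglongrightarrow> L" unfolding \<beta>_def L_def by (rule alpha_asymp)
  have b2: "(\<lambda>n. \<beta> (n - j)) \<longlonglongrightarrow> L"
    by (rule filterlim_compose[OF b filterlim_minus_const_nat_at_top])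
  have r: "(\<lambda>n. real n powr (3/2) / (real n - real j) powr (3/2)) \<longlonglongrightarrow> 1"
    by real_asymp
  have "(\<lambda>n. \<beta> (n - j) / \<beta> n * (real n powr (3/2) / (real n - real j) powr (3/2))) \<longlonglongrightarrow> L / L * 1"
    by (intro tendsto_intros b2 b r L)
  moreover have "eventually (\<lambda>n. \<beta> (n - j) / \<beta> n * (real n powr (3/2) / (real n - real j) powr (3/2)) = alpha (n - j) / alpha n) sequentially"
    using eventually_gt_at_top[of j]
  proof eventually_elim
    case (elim n)
    then have "real (n - j) = real n - real j" "real n - real j > 0" by auto
    then show ?case using alpha_ne[of n] alpha_ne[of "n-j"] elim unfolding \<beta>_def by (simp add: field_simps)
  qed
  ultimately show ?thesis using L Lim_transform_eventually by fastforce
qed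

definition uu :: "nat \<Rightarrow> nat \<Rightarrow> complex" where
  "uu k j = FF k $ j * of_real (eta k) ^ j"

definition WW :: "nat \<Rightarrow> nat \<Rightarrow> complex" where
  "WW k n = (\<Sum>j\<le>n. uu k j * of_real (alpha (n - j) / alpha n))"

lemma SS_nth: assumes k: "k \<ge> 2"
  shows "SS k $ n = of_real (alpha n * (1 / eta k) ^ n) * WW k n"
proof -
  define e where "e = eta k"
  have e: "e > 0" using eta_props[OF k] by (simp add: e_def)
  have "SS k $ n = (\<Sum>i=0..n. AA k $ i * FF k $ (n - i))"
    unfolding SS_def by (rule fps_mult_nth)
  also have "\<dots> = (\<Sum>j=0..n. AA k $ (n - j) * FF k $ j)"
    by (subst sum.atLeastAtMost_rev) simp
  also have "\<dots> = (\<Sum>j=0..n. of_real (alpha n * (1 / e) ^ n) * (uu k j * of_real (alpha (n - j) / alpha n)))"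
  proof (intro sum.cong refl)
    fix j assume j: "j \<in> {0..n}"
    have a: "AA k $ (n - j) = of_real (alpha (n - j) * (1/e) ^ (n - j))"
      by (simp add: AA_def alpha_def e_def power_mult_distrib[symmetric])
    have "(1/e) ^ (n - j) = (1/e)^n * e ^ j"
    proof -
      have "(1/e)^n * e^j = (1/e)^(n-j) * ((1/e)^j * e^j)" using j
        by (simp add: power_add[symmetric])
      also have "(1/e)^j * e^j = 1" using e by (simp add: power_mult_distrib[symmetric])
      finally show ?thesis by simp
    qed
    then show "AA k $ (n - j) * FF k $ j = of_real (alpha n * (1 / e) ^ n) * (uu k j * of_real (alpha (n - j) / alpha n))"
      unfolding a uu_def e_def[symmetric] using alpha_ne[of n] by (simp add: field_simps)
  qed
  also have "\<dots> = of_real (alpha n * (1 / e) ^ n) * WW k n"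
    by (simp add: WW_def sum_distrib_left atMost_atLeast0)
  finally show ?thesis by (simp add: e_def)
qed

lemma GG_eta: assumes k: "k \<ge> 2" shows "GG k (of_real (eta k)) = of_real (sqrt (psi k))"
proof -
  have "Qc k (of_real (eta k)) = of_real (- eta k * Dd k (Ck k) (eta k) (eta k))"
    by (simp add: Qc_def Dd_def Pw_def)
  also have "\<dots> = of_real (psi k)" by (simp add: psi_eq)
  finally show ?thesis using psi_pos[OF k] by (simp add: GG_def)
qed

lemma WW_lim: assumes k: "k \<ge> 2" shows "WW k \<longlonglongrightarrow> of_real (sqrt (psi k))"
proof -
  define e where "e = eta k"
  define \<theta> where "\<theta> = (eta k + rho k) / 2"
  have e: "0 < e" using eta_props[OF k] by (simp add: e_def)
  have th: "e < \<theta>" "\<theta> < rho k" using rho_gt[OF k] by (auto simp: \<theta>_def e_def)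
  define q where "q = e / \<theta>"
  have q: "0 < q" "q < 1" using e th by (auto simp: q_def)
  have "of_real \<theta> \<in> ball (0::complex) (rho k)" using e th by simp
  from FF_sums[OF k this] have "summable (\<lambda>j. FF k $ j * of_real \<theta> ^ j)" by (simp add: sums_iff)
  then have "(\<lambda>j. FF k $ j * of_real \<theta> ^ j) \<longlonglongrightarrow> 0" by (rule summable_LIMSEQ_zero)
  then have "eventually (\<lambda>j. norm (FF k $ j * of_real \<theta> ^ j) < 1) sequentially"
    by (rule order_tendstoD(2)[OF tendsto_norm_zero]) simp
  then obtain N where N: "\<And>j. j \<ge> N \<Longrightarrow> norm (FF k $ j * of_real \<theta> ^ j) < 1"
    by (auto simp: eventually_sequentially)
  have ub: "norm (uu k j) \<le> q ^ j" if "j \<ge> N" for j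
  proof -
    have "norm (uu k j) = norm (FF k $ j * of_real \<theta> ^ j) * q ^ j"
      using e th by (simp add: uu_def norm_mult norm_power q_def power_divide e_def[symmetric])
    also have "\<dots> \<le> 1 * q ^ j" using N[OF that] q by (intro mult_right_mono) auto
    finally show ?thesis by simp
  qed
  define a where "a j n = (if j \<le> n then uu k j * of_real (alpha (n - j) / alpha n) else 0)" for j n
  define M where "M j = 2 * (real j + 1)^2 * q ^ j" for j
  have lim: "(\<lambda>n. a j n) \<longlonglongrightarrow> uu k j" for j
  proof -
    have "(\<lambda>n. uu k j * of_real (alpha (n - j) / alpha n)) \<longlonglongrightarrow> uu k j * of_real 1"
      by (intro tendsto_intros alpha_ratio_lim)
    moreover have "eventually (\<lambda>n. uu k j * of_real (alpha (n - j) / alpha n) = a j n) sequentially"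
      using eventually_ge_at_top[of j] by eventually_elim (simp add: a_def)
    ultimately show ?thesis using Lim_transform_eventually by fastforce
  qed
  have bound: "eventually (\<lambda>(j, n). norm (a j n) \<le> M j) (at_top \<times>\<^sub>F sequentially)"
  proof -
  have "\<forall>n\<ge>N. \<forall>j\<ge>N. norm (a j n) \<le> M j"
  proof (intro allI impI)
    fix n j assume nN: "n \<ge> N" and jN: "j \<ge> N"
    show "norm (a j n) \<le> M j"
    proof (cases "j \<le> n")
      case True
      have "norm (a j n) = norm (uu k j) * \<bar>alpha (n - j) / alpha n\<bar>"
        using True by (simp add: a_def norm_mult norm_divide)
      also have "\<dots> \<le> q ^ j * (2 * (real j + 1)^2)"
        using ub[OF jN] alpha_ratio_bound[OF True] q by (intro mult_mono) (auto simp: abs_divide)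
      finally show ?thesis by (simp add: M_def algebra_simps)
    next
      case False then show ?thesis using q by (simp add: a_def M_def)
    qed
  qed
  then show ?thesis unfolding eventually_prod_sequentially by auto
  qed
  have sM: "summable M"
  proof -
    have "(\<lambda>j. (real j + 1)^2 * sqrt q ^ j) \<longlonglongrightarrow> 0" using q by real_asymp
    then have "eventually (\<lambda>j. (real j + 1)^2 * sqrt q ^ j < 1) sequentially"
      by (rule order_tendstoD(2)) simp
    then have ev: "eventually (\<lambda>j. norm (M j) \<le> 2 * sqrt q ^ j) sequentially"
    proof eventually_elim
      case (elim j)
      have "q ^ j = sqrt q ^ j * sqrt q ^ j" using q by (simp add: power_mult_distrib[symmetric])
      then have "M j = 2 * sqrt q ^ j * ((real j + 1)^2 * sqrt q ^ j)" by (simp add: M_def algebra_simps)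
      also have "\<dots> \<le> 2 * sqrt q ^ j * 1" using elim q by (intro mult_left_mono) auto
      finally show ?case using q by (simp add: M_def)
    qed
    have "summable (\<lambda>j. 2 * sqrt q ^ j)" using q by (intro summable_mult summable_geometric) auto
    then show ?thesis by (rule summable_comparison_test_ev[OF ev])
  qed
  have T: "(\<lambda>n. suminf (\<lambda>j. a j n)) \<longlonglongrightarrow> suminf (uu k)"
    using tannerys_theorem[OF lim bound sM] by simp
  have "suminf (\<lambda>j. a j n) = WW k n" for n
  proof -
    have "(\<lambda>j. a j n) sums (\<Sum>j\<in>{..n}. a j n)" by (rule sums_finite) (auto simp: a_def)
    then show ?thesis by (simp add: sums_iff WW_def a_def)
  qed
  moreover have "suminf (uu k) = of_real (sqrt (psi k))"
  proof -
    have "(\<lambda>j. FF k $ j * of_real (eta k) ^ j) sums GG k (of_real (eta k))"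
      by (rule FF_sums[OF k eta_in_ball[OF k]])
    then show ?thesis using GG_eta[OF k] by (simp add: sums_iff uu_def[abs_def])
  qed
  ultimately show ?thesis using T by simp
qed

lemma Bl_nth: assumes "n > 2*k" shows "Bl k (Cc k) fps_X $ Suc n = 0"
  using assms by (simp add: Bl_def fps_mult_numeral_left mult.assoc)

lemma cc_formula: assumes k: "k \<ge> 2" and n: "n > 2*k"
  shows "real (coeffR k n) = - (alpha (Suc n) * (1 / eta k) ^ Suc n * Re (WW k (Suc n))) / 4"
proof -
  have "complex_of_real (real (coeffR k n)) = RR k $ n" using RR_cc[OF k, of n] by (simp add: cc_def)
  also have "\<dots> = TT k $ Suc n / 4" by (simp add: RR_def)
  also have "\<dots> = - SS k $ Suc n / 4" using Bl_nth[OF n] by (simp add: TT_def)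
  also have "\<dots> = - (of_real (alpha (Suc n) * (1 / eta k) ^ Suc n) * WW k (Suc n)) / 4"
    by (simp add: SS_nth[OF k])
  finally have "complex_of_real (real (coeffR k n)) = - (of_real (alpha (Suc n) * (1 / eta k) ^ Suc n) * WW k (Suc n)) / 4" .
  then have "Re (complex_of_real (real (coeffR k n))) = Re (- (of_real (alpha (Suc n) * (1 / eta k) ^ Suc n) * WW k (Suc n)) / 4)"
    by simp
  then show ?thesis by simp
qed

lemma alg_final: fixes P Q e s r E a w :: real
  assumes "P>0" "Q>0" "e>0" "s>0" "r>0" "E>0"
  shows "-2 * r / s * (a * Q) * (P / Q) * w = (-(a * (E / e) * w)/4) / (s/(8*e*r) * (1/P) * E)"
  using assms by (simp add: field_simps)

theorem theorem2:
  fixes k :: nat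
  assumes "k \<ge> 2"
  shows "(\<lambda>n. real (coeffR k n)) \<sim>[at_top]
         (\<lambda>n. sqrt (psi k) / (8 * eta k * sqrt pi) * real n powr (-3/2) * (1 / eta k) ^ n)"
proof (rule asymp_equivI')
  have k: "k \<ge> 2" by (rule assms)
  define e where "e = eta k"
  define s where "s = sqrt (psi k)"
  have e: "e > 0" using eta_props[OF k] by (simp add: e_def)
  have s: "s > 0" using psi_pos[OF k] by (simp add: s_def)
  define w where "w n = Re (WW k (Suc n))" for n
  have w: "w \<longlonglongrightarrow> s"
  proof -
    have "(\<lambda>n. WW k (Suc n)) \<longlonglongrightarrow> of_real (sqrt (psi k))" by (rule LIMSEQ_Suc[OF WW_lim[OF k]])
    then have "(\<lambda>n. Re (WW k (Suc n))) \<longlonglongrightarrow> Re (of_real (sqrt (psi k)))" by (rule tendsto_Re)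
    then show ?thesis by (simp add: w_def[abs_def] s_def)
  qed
  define ex where "ex n = - 2 * sqrt pi / s * (alpha (Suc n) * real (Suc n) powr (3/2))
      * (real n powr (3/2) / real (Suc n) powr (3/2)) * w n" for n
  have a1: "(\<lambda>n. alpha (Suc n) * real (Suc n) powr (3/2)) \<longlonglongrightarrow> - 1 / (2 * sqrt pi)"
    by (rule LIMSEQ_Suc[OF alpha_asymp])
  have a2: "(\<lambda>n. real n powr (3/2) / real (Suc n) powr (3/2)) \<longlonglongrightarrow> 1"
    unfolding of_nat_Suc by real_asymp
  have "ex \<longlonglongrightarrow> - 2 * sqrt pi / s * (- 1 / (2 * sqrt pi)) * 1 * s"
    unfolding ex_def by (intro tendsto_intros a1 a2 w)
  also have "- 2 * sqrt pi / s * (- 1 / (2 * sqrt pi)) * 1 * s = 1" using s by simp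
  finally have exl: "ex \<longlonglongrightarrow> 1" .
  have "eventually (\<lambda>n. ex n = real (coeffR k n) /
      (sqrt (psi k) / (8 * eta k * sqrt pi) * real n powr (-3/2) * (1 / eta k) ^ n)) sequentially"
    using eventually_gt_at_top[of "2*k"]
  proof eventually_elim
    case (elim n)
    have n0: "real n > 0" using elim by simp
    define P where "P = real n powr (3/2)"
    define Q where "Q = real (Suc n) powr (3/2)"
    have P: "P > 0" using n0 by (simp add: P_def)
    have Q: "Q > 0" by (simp add: Q_def)
    have m32: "(-3/2::real) = - (3/2)" by simp
    have Pm: "real n powr (-3/2) = 1 / P"
      unfolding m32 powr_minus P_def by (simp add: inverse_eq_divide)
    have E: "(1/e) ^ Suc n = (1/e)^n / e" by simp
    have En: "(1/e)^n > 0" using e by simp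
    have pi: "sqrt pi > 0" by simp
    show ?case
      unfolding cc_formula[OF k elim] ex_def e_def[symmetric] s_def[symmetric] w_def[symmetric]
        P_def[symmetric] Q_def[symmetric] Pm E
      by (rule alg_final[OF P Q e s pi En])
  qed
  then show "((\<lambda>n. real (coeffR k n) /
      (sqrt (psi k) / (8 * eta k * sqrt pi) * real n powr (-3/2) * (1 / eta k) ^ n)) \<longlongrightarrow> 1) at_top"
    using exl Lim_transform_eventually by fastforce
qed

end
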